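(* Let $m$ be a divisor of $n$, $s=n/m$, $\alpha$ a primitive element of $\mathbb{F}_{q^n}$, $l$ an integer with $1\le l<\frac{q^n-1}{q^m-1}$, and $L$ the degree of the minimal polynomial of $\alpha^l$ over $\mathbb{F}_{q^m}$. Let $r\ge2$ and integers $1\le s_1<\dots<s_r\le L$ with $s_r<s$, and let $\mathcal{F}=(\mathcal{F}_1,\dots,\mathcal{F}_r)$ be the flag with $\mathcal{F}_i=\bigoplus_{j=0}^{s_i-1}\mathbb{F}_{q^m}\alpha^{lj}$ (of type $(ms_1,\dots,ms_r)$). Then $\mathrm{Orb}(\mathcal{F})$ has best friend $\mathbb{F}_{q^m}$ and $|\mathrm{Orb}(\mathcal{F})|=\frac{q^n-1}{q^m-1}$. Moreover: (1) If $s_r<L$, then $\mathrm{Orb}(\mathcal{F})$ is consistent and $d_f(\mathrm{Orb}(\mathcal{F}))=2mr$. (2) If $s_r=L$, then $d_f(\mathrm{Orb}(\mathcal{F}))=2m(r-1)$ and, with $c=\frac{q^n-1}{q^{mL}-1}$, $\mathrm{Orb}(\mathcal{F})$ is the disjoint union $\dot\bigcup_{i=0}^{c-1}\mathrm{Orb}_{\alpha^c}(\mathcal{F}\alpha^i)$.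
   Context: $q$ prime power; $\mathbb{F}_{q^n}$ is an $n$-dimensional $\mathbb{F}_q$-vector space; subspaces are $\mathbb{F}_q$-subspaces; $d_S(\mathcal{U},\mathcal{V})=\dim(\mathcal{U}+\mathcal{V})-\dim(\mathcal{U}\cap\mathcal{V})$. A flag is a chain $\{0\}\subsetneq\mathcal{F}_1\subsetneq\cdots\subsetneq\mathcal{F}_r\subsetneq\mathbb{F}_{q^n}$; $d_f(\mathcal{F},\mathcal{F}')=\sum_i d_S(\mathcal{F}_i,\mathcal{F}'_i)$; the minimum distance of a flag code is the minimum $d_f$ between distinct codewords. For $\beta\in\mathbb{F}_{q^n}^\ast$, $\mathcal{F}\beta=(\mathcal{F}_1\beta,\dots,\mathcal{F}_r\beta)$, $\mathrm{Orb}_\beta(\mathcal{F})=\{\mathcal{F}\beta^j:j\ge0\}$, and $\mathrm{Orb}(\mathcal{F})=\mathrm{Orb}_\alpha(\mathcal{F})$ for $\alpha$ primitive. The $i$-th projected code of a flag code $\mathcal{C}$ is $\mathcal{C}_i=\{\mathcal{F}_i:\mathcal{F}\in\mathcal{C}\}$. $\mathcal{C}$ is disjoint if $|\mathcal{C}_i|=|\mathcal{C}|$ for all $i$, and consistent if it is disjoint and $d_f(\mathcal{C})=\sum_i d_S(\mathcal{C}_i)$ (minimum subspace distances of the projected codes). A subfield $\mathbb{F}_{q^m}$ is a friend of a subspace if the subspace is an $\mathbb{F}_{q^m}$-vector space; a friend of a flag is a common friend of all its subspaces; the best friend is the largest friend (of a code $\mathrm{Orb}_\beta(\mathcal{F})$: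 that of $\mathcal{F}$). *)

theory Defs
  imports "HOL-Computational_Algebra.Polynomial" "HOL-Computational_Algebra.Primes"
begin

text \<open>The ambient field F_{q^n} is a finite field type 'a with CARD('a) = q^n.
  The subfield F_{q^d} (d dividing n) is the set of roots of X^(q^d) - X.\<close>

definition subfield :: "nat \<Rightarrow> nat \<Rightarrow> 'a::{finite,field} set" where
  "subfield q d = {x. x ^ (q ^ d) = x}"

definition prime_power :: "nat \<Rightarrow> bool" where
  "prime_power q \<longleftrightarrow> (\<exists>p k. prime p \<and> k > 0 \<and> q = p ^ k)"

definition primitive_elem :: "'a::{finite,field} \<Rightarrow> bool" where
  "primitive_elem a \<longleftrightarrow> (\<forall>x. x \<noteq> 0 \<longrightarrow> (\<exists>j::nat. x = a ^ j))"

definition fq_subspace :: "nat \<Rightarrow> 'a::{finite,field} set \<Rightarrow> bool" where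
  "fq_subspace q U \<longleftrightarrow> 0 \<in> U \<and> (\<forall>u\<in>U. \<forall>v\<in>U. u + v \<in> U)
     \<and> (\<forall>c\<in>subfield q 1. \<forall>u\<in>U. c * u \<in> U)"

definition dimq :: "nat \<Rightarrow> 'a::{finite,field} set \<Rightarrow> nat" where
  "dimq q U = (THE k. card U = q ^ k)"

definition ssum :: "'a::{finite,field} set \<Rightarrow> 'a set \<Rightarrow> 'a set" where
  "ssum U V = {u + v | u v. u \<in> U \<and> v \<in> V}"

definition subspace_dist :: "nat \<Rightarrow> 'a::{finite,field} set \<Rightarrow> 'a set \<Rightarrow> nat" where
  "subspace_dist q U V = dimq q (ssum U V) - dimq q (U \<inter> V)"

definition flag_dist :: "nat \<Rightarrow> 'a::{finite,field} set list \<Rightarrow> 'a set list \<Rightarrow> nat" where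
  "flag_dist q F G = (\<Sum>i<length F. subspace_dist q (F ! i) (G ! i))"

definition flag_min_dist :: "nat \<Rightarrow> 'a::{finite,field} set list set \<Rightarrow> nat" where
  "flag_min_dist q C = Min {flag_dist q F G | F G. F \<in> C \<and> G \<in> C \<and> F \<noteq> G}"

definition subspace_min_dist :: "nat \<Rightarrow> 'a::{finite,field} set set \<Rightarrow> nat" where
  "subspace_min_dist q C = Min {subspace_dist q U V | U V. U \<in> C \<and> V \<in> C \<and> U \<noteq> V}"

definition projected :: "'a set list set \<Rightarrow> nat \<Rightarrow> 'a set set" where
  "projected C i = {F ! i | F. F \<in> C}"

definition disjoint_code :: "nat \<Rightarrow> 'a set list set \<Rightarrow> bool" where
  "disjoint_code r C \<longleftrightarrow> (\<forall>i<r. card (projected C i) = card C)"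

definition consistent_code :: "nat \<Rightarrow> nat \<Rightarrow> 'a::{finite,field} set list set \<Rightarrow> bool" where
  "consistent_code q r C \<longleftrightarrow> disjoint_code r C \<and>
     flag_min_dist q C = (\<Sum>i<r. subspace_min_dist q (projected C i))"

definition flag_mult :: "'a::{finite,field} set list \<Rightarrow> 'a \<Rightarrow> 'a set list" where
  "flag_mult F b = map (\<lambda>U. (\<lambda>x. x * b) ` U) F"

definition orb :: "'a::{finite,field} \<Rightarrow> 'a set list \<Rightarrow> 'a set list set" where
  "orb b F = {flag_mult F (b ^ j) | j. True}"

definition flag_friend :: "nat \<Rightarrow> nat \<Rightarrow> nat \<Rightarrow> 'a::{finite,field} set list \<Rightarrow> bool" where
  "flag_friend q n d F \<longleftrightarrow> d dvd n \<and>
     (\<forall>U\<in>set F. \<forall>c\<in>subfield q d. \<forall>u\<in>U. c * u \<in> U)"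

definition is_best_friend :: "nat \<Rightarrow> nat \<Rightarrow> nat \<Rightarrow> 'a::{finite,field} set list \<Rightarrow> bool" where
  "is_best_friend q n d F \<longleftrightarrow> flag_friend q n d F \<and> (\<forall>d'. flag_friend q n d' F \<longrightarrow> d' \<le> d)"

definition minpoly_degree :: "nat \<Rightarrow> nat \<Rightarrow> 'a::{finite,field} \<Rightarrow> nat" where
  "minpoly_degree q m a = (LEAST d. \<exists>p::'a poly. p \<noteq> 0 \<and> degree p = d \<and>
      (\<forall>i. coeff p i \<in> subfield q m) \<and> poly p a = 0)"

definition fspan :: "nat \<Rightarrow> nat \<Rightarrow> nat \<Rightarrow> (nat \<Rightarrow> 'a::{finite,field}) \<Rightarrow> 'a set" where
  "fspan q m k v = {(\<Sum>j<k. c j * v j) | c. \<forall>j<k. c j \<in> subfield q m}"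

end

theory Submission imports Defs "HOL-Number_Theory.Residues" "HOL-Library.FuncSet"
begin

lemma pow_divmod: "(x::'b::monoid_mult) ^ j = (x ^ t) ^ (j div t) * x ^ (j mod t)"
  by (metis div_mult_mod_eq power_add power_mult mult.commute)

locale ff =
  fixes \<alpha> :: "'a::{finite,field}" and q n m :: nat
  assumes pp: "prime_power q" and n1: "n \<ge> 1" and cardU: "card (UNIV :: 'a set) = q ^ n"
    and mdvd: "m dvd n" and prim: "primitive_elem \<alpha>"
begin

lemma q2: "q \<ge> 2"
proof -
  obtain p k where "prime p" "k > 0" "q = p ^ k" using pp unfolding prime_power_def by blast
  then have "p \<ge> 2" by (simp add: prime_ge_2_nat)
  moreover have "p ^ 1 \<le> p ^ k" using \<open>k > 0\<close> \<open>p \<ge> 2\<close> by (intro power_increasing) auto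
  ultimately show ?thesis using \<open>q = p ^ k\<close> by simp
qed

lemma char_q: "\<exists>e. q = CHAR('a) ^ e"
proof -
  obtain p k where p: "prime p" "k > 0" "q = p ^ k" using pp unfolding prime_power_def by blast
  have fin: "finite (UNIV :: 'a set)" by simp
  have pc: "prime CHAR('a)" using prime_CHAR_semidom[where ?'a = 'a] finite_imp_CHAR_pos[OF fin] by blast
  have "CHAR('a) dvd p ^ (k * n)" using CHAR_dvd_CARD[where ?'a='a] cardU p by (simp add: power_mult)
  then have "CHAR('a) dvd p" using pc prime_dvd_power by blast
  then have "CHAR('a) = p" using pc p by (simp add: primes_dvd_imp_eq)
  then show ?thesis using p by auto
qed

lemma prime_char: "prime CHAR('a)"
proof -
  have fin: "finite (UNIV :: 'a set)" by simp
  show ?thesis using prime_CHAR_semidom[where ?'a = 'a] finite_imp_CHAR_pos[OF fin] by blast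
qed

lemma frob_add: "(x + y :: 'a) ^ (q ^ d) = x ^ (q ^ d) + y ^ (q ^ d)"
proof -
  obtain e where "q = CHAR('a) ^ e" using char_q by blast
  then have "q ^ d = CHAR('a) ^ (e * d)" by (simp add: power_mult)
  then show ?thesis using freshmans_dream'[OF prime_char] by blast
qed

lemma frob_diff: "(x - y :: 'a) ^ (q ^ d) = x ^ (q ^ d) - y ^ (q ^ d)"
proof -
  have "x ^ (q ^ d) = (x - y) ^ (q ^ d) + y ^ (q ^ d)" using frob_add[of "x - y" y d] by simp
  then show ?thesis by (simp add: algebra_simps)
qed


definition "N = q ^ n - 1"

lemma qn2: "q ^ n \<ge> 2"
proof -
  have "q ^ 1 \<le> q ^ n" using q2 n1 by (intro power_increasing) auto
  then show ?thesis using q2 by simp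
qed

lemma N_pos: "N > 0" using qn2 unfolding N_def by simp

lemma pow_card: "(x::'a) ^ card (UNIV :: 'a set) = x"
proof (cases "x = 0")
  case False
  have "x * (\<Prod>y\<in>UNIV-{0}. x * y) = x * x ^ (card (UNIV :: 'a set) - 1) * \<Prod>(UNIV-{0})"
    by (simp add: prod.distrib mult_ac)
  also have "x * x ^ (card (UNIV :: 'a set) - 1) = x ^ Suc (card (UNIV :: 'a set) - 1)"
    by (subst power_Suc) auto
  also have "Suc (card (UNIV :: 'a set) - 1) = card (UNIV :: 'a set)"
    using finite_UNIV_card_ge_0[where ?'a = 'a] by simp
  also have "(\<Prod>y\<in>UNIV-{0}. x * y) = (\<Prod>y\<in>UNIV-{0}. y)"
    by (rule prod.reindex_bij_witness[of _ "\<lambda>y. y / x" "\<lambda>y. x * y"]) (use False in auto)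
  finally show ?thesis
    by simp
qed (use finite_UNIV_card_ge_0[where ?'a = 'a] in auto)

lemma pow_N: "(x::'a) \<noteq> 0 \<Longrightarrow> x ^ N = 1"
proof -
  assume "x \<noteq> 0"
  have "x * x ^ N = x ^ Suc N" by simp
  also have "Suc N = q ^ n" using qn2 unfolding N_def by simp
  also have "x ^ (q ^ n) = x" using pow_card cardU by simp
  finally show ?thesis using \<open>x \<noteq> 0\<close> by simp
qed

lemma zero_sf: "(0::'a) \<in> subfield q d" unfolding subfield_def using q2 by simp

end

locale ffa = ff +
  assumes anz: "\<alpha> \<noteq> 0"
begin



lemma nz_pow: "(x::'a) \<noteq> 0 \<Longrightarrow> \<exists>j<N. x = \<alpha> ^ j"
proof -
  assume "x \<noteq> 0"
  then obtain j::nat where "x = \<alpha> ^ j" using prim unfolding primitive_elem_def by blast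
  moreover have "\<alpha> ^ j = \<alpha> ^ (j mod N)"
  proof -
    show ?thesis using pow_N[OF anz] pow_divmod[of \<alpha> j N] by simp
  qed
  ultimately show ?thesis using N_pos by (metis mod_less_divisor)
qed

lemma card_nz: "card (UNIV - {0::'a}) = N"
  using cardU unfolding N_def by (simp add: card_Diff_singleton)

lemma alpha_pow_1: "\<alpha> ^ j = 1 \<longleftrightarrow> N dvd j"
proof
  assume "N dvd j" then show "\<alpha> ^ j = 1" using pow_N[OF anz] by (auto simp: power_mult)
next
  assume h: "\<alpha> ^ j = 1"
  define t where "t = j mod N"
  have t1: "\<alpha> ^ t = 1"
  proof -
    show ?thesis using pow_N[OF anz] pow_divmod[of \<alpha> j N] h unfolding t_def by simp
  qed
  have "t = 0"
  proof (rule ccontr)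
    assume "t \<noteq> 0"
    have "UNIV - {0::'a} \<subseteq> (\<lambda>i. \<alpha> ^ i) ` {..<t}"
    proof
      fix x :: 'a assume "x \<in> UNIV - {0}"
      then obtain i where "x = \<alpha> ^ i" using prim unfolding primitive_elem_def by blast
      have "\<alpha> ^ i = (\<alpha> ^ t) ^ (i div t) * \<alpha> ^ (i mod t)" by (rule pow_divmod)
      then have "x = \<alpha> ^ (i mod t)" using t1 \<open>x = _\<close> by simp
      then show "x \<in> (\<lambda>i. \<alpha> ^ i) ` {..<t}" using \<open>t \<noteq> 0\<close> by auto
    qed
    then have "N \<le> card ((\<lambda>i. \<alpha> ^ i) ` {..<t})" using card_nz by (metis card_mono finite)
    also have "\<dots> \<le> t" using card_image_le[of "{..<t}"] by simp
    finally show False using t_def N_pos by (meson mod_less_divisor not_le)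
  qed
  then show "N dvd j" unfolding t_def by (simp add: mod_eq_0_iff_dvd)
qed

lemma alpha_pow_eq: "\<alpha> ^ i = \<alpha> ^ j \<longleftrightarrow> i mod N = j mod N"
proof -
  have *: "\<alpha> ^ i = \<alpha> ^ j \<longleftrightarrow> i mod N = j mod N" if "i \<le> j" for i j
  proof -
    have "\<alpha> ^ j = \<alpha> ^ i * \<alpha> ^ (j - i)" using that by (simp flip: power_add)
    then have "\<alpha> ^ i = \<alpha> ^ j \<longleftrightarrow> \<alpha> ^ (j - i) = 1" using anz by auto
    also have "\<dots> \<longleftrightarrow> N dvd (j - i)" by (rule alpha_pow_1)
    also have "\<dots> \<longleftrightarrow> j mod N = i mod N" using that by (simp add: mod_eq_dvd_iff_nat)
    finally show ?thesis by auto
  qed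
  show ?thesis by (cases "i \<le> j") (use *[of i j] *[of j i] in auto)
qed

lemma powset_card:
  assumes "t dvd N" "t > 0"
  shows "{\<alpha> ^ j | j. t dvd j} = (\<lambda>k. \<alpha> ^ (t * k)) ` {..<N div t}"
    and "card {\<alpha> ^ j | j. t dvd j} = N div t"
proof -
  obtain u where u: "N = t * u" using assms by blast
  have ud: "N div t = u" using u assms by simp
  show eq: "{\<alpha> ^ j | j. t dvd j} = (\<lambda>k. \<alpha> ^ (t * k)) ` {..<N div t}"
  proof
    show "{\<alpha> ^ j | j. t dvd j} \<subseteq> (\<lambda>k. \<alpha> ^ (t * k)) ` {..<N div t}"
    proof
      fix x assume "x \<in> {\<alpha> ^ j | j. t dvd j}"
      then obtain k where x: "x = \<alpha> ^ (t * k)" by auto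
      have "(t * k) mod N = (t * (k mod u)) mod N" using u by (simp add: mod_mult_mult1)
      then have "x = \<alpha> ^ (t * (k mod u))" using x alpha_pow_eq by blast
      moreover have "k mod u < u" using u N_pos by simp
      ultimately show "x \<in> (\<lambda>k. \<alpha> ^ (t * k)) ` {..<N div t}" using ud by auto
    qed
  qed auto
  have "inj_on (\<lambda>k. \<alpha> ^ (t * k)) {..<N div t}"
  proof (rule inj_onI)
    fix a b assume "a \<in> {..<N div t}" "b \<in> {..<N div t}" "\<alpha> ^ (t * a) = \<alpha> ^ (t * b)"
    then have "(t * a) mod N = (t * b) mod N" "t * a < N" "t * b < N" using alpha_pow_eq u ud assms by auto
    then show "a = b" using assms by simp
  qed
  then show "card {\<alpha> ^ j | j. t dvd j} = N div t" unfolding eq by (simp add: card_image)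
qed

lemma nat_pm1_dvd: "(a::nat) - 1 dvd a ^ k - 1"
proof (cases "a = 0")
  case True then show ?thesis by (cases k) auto
next
  case False
  have "int (a - 1) dvd int (a ^ k - 1)"
  proof -
    have "int (a - 1) = int a - 1" "int (a ^ k - 1) = int a ^ k - 1" using False by (auto simp: of_nat_diff)
    moreover have "int a - 1 dvd int a ^ k - 1" using power_diff_1_eq[of "int a" k] by (metis dvd_triv_left)
    ultimately show ?thesis by simp
  qed
  then show ?thesis by simp
qed

lemma sub_dvd: "d dvd n \<Longrightarrow> (q ^ d - 1) dvd N"
proof -
  assume "d dvd n"
  then obtain e where "n = d * e" by blast
  then have "q ^ n = (q ^ d) ^ e" by (simp add: power_mult)
  then show ?thesis unfolding N_def using nat_pm1_dvd by simp
qed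

lemma subfield_nz:
  assumes "d dvd n"
  shows "subfield q d - {0::'a} = {\<alpha> ^ j | j. (N div (q ^ d - 1)) dvd j}"
proof -
  define D where "D = q ^ d - 1"
  define t where "t = N div D"
  have "d > 0" using dvd_pos_nat[of n d] assms n1 by simp
  have q1: "1 < q ^ d" by (rule one_less_power) (use q2 \<open>d > 0\<close> in auto)
  then have Dpos: "D > 0" unfolding D_def by simp
  have "D dvd N" using sub_dvd[OF assms] unfolding D_def .
  then have Nt: "N = t * D" unfolding t_def by simp
  have key: "\<alpha> ^ j \<in> subfield q d \<longleftrightarrow> t dvd j" for j
  proof -
    have le: "j \<le> j * q ^ d" using q1 by simp
    have "\<alpha> ^ j \<in> subfield q d \<longleftrightarrow> \<alpha> ^ (j * q ^ d) = \<alpha> ^ j"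
      unfolding subfield_def by (simp add: power_mult)
    also have "\<dots> \<longleftrightarrow> (j * q ^ d) mod N = j mod N" by (rule alpha_pow_eq)
    also have "\<dots> \<longleftrightarrow> N dvd (j * q ^ d - j)" by (rule mod_eq_dvd_iff_nat[OF le])
    also have "j * q ^ d - j = j * D" unfolding D_def by (simp add: diff_mult_distrib2)
    also have "N dvd j * D \<longleftrightarrow> t dvd j" unfolding Nt using Dpos by simp
    finally show ?thesis .
  qed
  show ?thesis
  proof
    show "subfield q d - {0::'a} \<subseteq> {\<alpha> ^ j | j. (N div (q ^ d - 1)) dvd j}"
    proof
      fix x :: 'a assume x: "x \<in> subfield q d - {0}"
      then obtain j where j: "x = \<alpha> ^ j" using nz_pow by blast
      then have "t dvd j" using key x by blast
      then show "x \<in> {\<alpha> ^ j | j. (N div (q ^ d - 1)) dvd j}" using j unfolding t_def D_def by blast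
    qed
    show "{\<alpha> ^ j | j. (N div (q ^ d - 1)) dvd j} \<subseteq> subfield q d - {0}"
    proof
      fix x assume "x \<in> {\<alpha> ^ j | j. (N div (q ^ d - 1)) dvd j}"
      then obtain j where j: "x = \<alpha> ^ j" "t dvd j" unfolding t_def D_def by blast
      then show "x \<in> subfield q d - {0}" using key anz by simp
    qed
  qed
qed

lemma subfield_card:
  assumes "d dvd n"
  shows "card (subfield q d :: 'a set) = q ^ d"
proof -
  define D where "D = q ^ d - 1"
  have "d > 0" using dvd_pos_nat[of n d] assms n1 by simp
  have q1: "1 < q ^ d" by (rule one_less_power) (use q2 \<open>d > 0\<close> in auto)
  then have Dpos: "D > 0" unfolding D_def by simp
  have Ddvd: "D dvd N" using sub_dvd[OF assms] unfolding D_def .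
  define t where "t = N div D"
  have Nt: "N = t * D" unfolding t_def using Ddvd by simp
  have tdvd: "t dvd N" "t > 0" using Nt N_pos by auto
  have "subfield q d - {0::'a} = {\<alpha> ^ j | j. t dvd j}"
    using subfield_nz[OF assms] unfolding t_def D_def .
  then have "card (subfield q d - {0::'a}) = N div t"
    using powset_card(2)[OF tdvd] by simp
  also have "N div t = D" using Nt tdvd by simp
  finally have c: "card (subfield q d - {0::'a}) = D" .
  have "card (subfield q d - {0::'a}) = card (subfield q d :: 'a set) - 1"
    using zero_sf[of d] by (simp add: card_Diff_singleton)
  then show ?thesis using c q1 unfolding D_def by linarith
qed

end

context ff
begin

lemma sf_mult: "(x::'a) \<in> subfield q d \<Longrightarrow> y \<in> subfield q d \<Longrightarrow> x * y \<in> subfield q d"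
  unfolding subfield_def by (simp add: power_mult_distrib)
lemma sf_add: "(x::'a) \<in> subfield q d \<Longrightarrow> y \<in> subfield q d \<Longrightarrow> x + y \<in> subfield q d"
  unfolding subfield_def by (simp add: frob_add)
lemma sf_diff: "(x::'a) \<in> subfield q d \<Longrightarrow> y \<in> subfield q d \<Longrightarrow> x - y \<in> subfield q d"
  unfolding subfield_def by (simp add: frob_diff)
lemma sf_one: "(1::'a) \<in> subfield q d" unfolding subfield_def by simp
lemma sf_uminus: "(x::'a) \<in> subfield q d \<Longrightarrow> - x \<in> subfield q d"
  using sf_diff[of 0 d x] zero_sf by simp
lemma sf_inv: "(x::'a) \<in> subfield q d \<Longrightarrow> inverse x \<in> subfield q d"
  unfolding subfield_def by (simp add: power_inverse)
lemma sf_divide: "(x::'a) \<in> subfield q d \<Longrightarrow> y \<in> subfield q d \<Longrightarrow> x / y \<in> subfield q d"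
  by (simp add: divide_inverse sf_mult sf_inv)
lemma sf_sum: "(\<And>i. i \<in> A \<Longrightarrow> (f i::'a) \<in> subfield q d) \<Longrightarrow> sum f A \<in> subfield q d"
  by (induction A rule: infinite_finite_induct) (auto simp: zero_sf sf_add)


definition K :: "'a set" where "K = subfield q m"
definition "Q = q ^ m"

definition ksub :: "'a set \<Rightarrow> bool" where
  "ksub W \<longleftrightarrow> 0 \<in> W \<and> (\<forall>u\<in>W. \<forall>v\<in>W. u + v \<in> W) \<and> (\<forall>c\<in>K. \<forall>u\<in>W. c * u \<in> W)"

lemma m_pos: "m > 0" using dvd_pos_nat[of n m] mdvd n1 by simp

lemma Q_gt1: "Q > 1" unfolding Q_def by (rule one_less_power) (use q2 m_pos in auto)

lemma K0: "0 \<in> K" unfolding K_def by (rule zero_sf)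
lemma K1: "1 \<in> K" unfolding K_def by (rule sf_one)
lemma Kadd: "x \<in> K \<Longrightarrow> y \<in> K \<Longrightarrow> x + y \<in> K" unfolding K_def by (rule sf_add)
lemma Kdiff: "x \<in> K \<Longrightarrow> y \<in> K \<Longrightarrow> x - y \<in> K" unfolding K_def by (rule sf_diff)
lemma Kmult: "x \<in> K \<Longrightarrow> y \<in> K \<Longrightarrow> x * y \<in> K" unfolding K_def by (rule sf_mult)
lemma Kuminus: "x \<in> K \<Longrightarrow> - x \<in> K" unfolding K_def by (rule sf_uminus)
lemma Kinv: "x \<in> K \<Longrightarrow> inverse x \<in> K" unfolding K_def by (rule sf_inv)
lemma Kdivide: "x \<in> K \<Longrightarrow> y \<in> K \<Longrightarrow> x / y \<in> K" unfolding K_def by (rule sf_divide)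
lemma Ksum: "(\<And>i. i \<in> A \<Longrightarrow> f i \<in> K) \<Longrightarrow> sum f A \<in> K" unfolding K_def by (rule sf_sum)

lemma ksub0: "ksub W \<Longrightarrow> 0 \<in> W" unfolding ksub_def by blast
lemma ksub_add: "ksub W \<Longrightarrow> u \<in> W \<Longrightarrow> v \<in> W \<Longrightarrow> u + v \<in> W" unfolding ksub_def by blast
lemma ksub_smult: "ksub W \<Longrightarrow> c \<in> K \<Longrightarrow> u \<in> W \<Longrightarrow> c * u \<in> W" unfolding ksub_def by blast
lemma ksub_uminus: "ksub W \<Longrightarrow> u \<in> W \<Longrightarrow> - u \<in> W"
  using ksub_smult[of W "-1" u] Kuminus[OF K1] by simp
lemma ksub_diff: "ksub W \<Longrightarrow> u \<in> W \<Longrightarrow> v \<in> W \<Longrightarrow> u - v \<in> W"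
  using ksub_add[of W u "- v"] ksub_uminus[of W v] by simp
lemma ksub_sum: "ksub W \<Longrightarrow> (\<And>i. i \<in> A \<Longrightarrow> f i \<in> W) \<Longrightarrow> sum f A \<in> W"
  by (induction A rule: infinite_finite_induct) (auto simp: ksub0 ksub_add)

lemma ksub_zero: "ksub {0}" unfolding ksub_def by simp
lemma ksub_Int: "ksub U \<Longrightarrow> ksub V \<Longrightarrow> ksub (U \<inter> V)" unfolding ksub_def by blast
lemma ksub_ssum: "ksub U \<Longrightarrow> ksub V \<Longrightarrow> ksub (ssum U V)"
proof -
  assume U: "ksub U" and V: "ksub V"
  show ?thesis unfolding ksub_def
  proof (intro conjI ballI)
    show "0 \<in> ssum U V" unfolding ssum_def using ksub0[OF U] ksub0[OF V] by force
  next
    fix x y assume "x \<in> ssum U V" "y \<in> ssum U V"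
    then obtain u v u' v' where "x = u + v" "y = u' + v'" "u \<in> U" "v \<in> V" "u' \<in> U" "v' \<in> V"
      unfolding ssum_def by blast
    then have "x + y = (u + u') + (v + v')" "u + u' \<in> U" "v + v' \<in> V"
      using ksub_add[OF U] ksub_add[OF V] by (auto simp: algebra_simps)
    then show "x + y \<in> ssum U V" unfolding ssum_def by blast
  next
    fix c x assume "c \<in> K" "x \<in> ssum U V"
    then obtain u v where "x = u + v" "u \<in> U" "v \<in> V" unfolding ssum_def by blast
    moreover have "c * u \<in> U" "c * v \<in> V"
      using ksub_smult[OF U \<open>c \<in> K\<close>] ksub_smult[OF V \<open>c \<in> K\<close>] \<open>u \<in> U\<close> \<open>v \<in> V\<close> by auto
    moreover have "c * x = c * u + c * v" using \<open>x = u + v\<close> by (simp add: algebra_simps)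
    ultimately show "c * x \<in> ssum U V" unfolding ssum_def by blast
  qed
qed

lemma ssum_sub1: "ksub V \<Longrightarrow> U \<subseteq> ssum U V"
proof
  fix u assume V: "ksub V" and u: "u \<in> U"
  have "u + 0 \<in> ssum U V" unfolding ssum_def using ksub0[OF V] u by blast
  then show "u \<in> ssum U V" by simp
qed
lemma ssum_sub2: "ksub U \<Longrightarrow> V \<subseteq> ssum U V"
proof
  fix v assume U: "ksub U" and v: "v \<in> V"
  have "0 + v \<in> ssum U V" unfolding ssum_def using ksub0[OF U] v by blast
  then show "v \<in> ssum U V" by simp
qed
lemma ssum_le: "ksub S \<Longrightarrow> U \<subseteq> S \<Longrightarrow> V \<subseteq> S \<Longrightarrow> ssum U V \<subseteq> S"
proof
  fix x assume S: "ksub S" "U \<subseteq> S" "V \<subseteq> S" and x: "x \<in> ssum U V"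
  then obtain u v where "x = u + v" "u \<in> U" "v \<in> V" unfolding ssum_def by blast
  then show "x \<in> S" using ksub_add[OF S(1)] S by blast
qed
lemma ssum_self: "ksub U \<Longrightarrow> ssum U U = U"
proof -
  assume U: "ksub U"
  show ?thesis using ssum_sub1[OF U, of U] ssum_le[OF U subset_refl subset_refl] by (rule antisym[rotated])
qed

lemma ksub_image_mult: "ksub W \<Longrightarrow> ksub ((\<lambda>x. x * g) ` W)"
proof -
  assume W: "ksub W"
  show ?thesis unfolding ksub_def
  proof (intro conjI ballI)
    have "0 * g \<in> (\<lambda>x. x * g) ` W" using ksub0[OF W] by (rule imageI)
    then show "0 \<in> (\<lambda>x. x * g) ` W" by simp
  next
    fix x y assume "x \<in> (\<lambda>x. x * g) ` W" "y \<in> (\<lambda>x. x * g) ` W"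
    then obtain u v where "x = u * g" "y = v * g" "u \<in> W" "v \<in> W" by blast
    then have "x + y = (u + v) * g" "u + v \<in> W" using ksub_add[OF W] by (auto simp: algebra_simps)
    then show "x + y \<in> (\<lambda>x. x * g) ` W" by (metis imageI)
  next
    fix c x assume "c \<in> K" "x \<in> (\<lambda>x. x * g) ` W"
    then obtain u where "x = u * g" "u \<in> W" by blast
    then have "c * x = (c * u) * g" by (simp add: algebra_simps)
    moreover have "c * u \<in> W" using ksub_smult[OF W \<open>c \<in> K\<close> \<open>u \<in> W\<close>] .
    ultimately show "c * x \<in> (\<lambda>x. x * g) ` W" by (metis imageI)
  qed
qed

end

context ffa
begin



lemma cardK: "card K = Q" unfolding K_def Q_def by (rule subfield_card[OF mdvd])

lemma ksub_ext:
  assumes W: "ksub W" and w: "w \<notin> W"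
  defines "W1 \<equiv> {u + c * w | u c. u \<in> W \<and> c \<in> K}"
  shows "ksub W1" "W \<subseteq> W1" "card W1 = Q * card W"
    "\<And>W'. ksub W' \<Longrightarrow> W \<subseteq> W' \<Longrightarrow> w \<in> W' \<Longrightarrow> W1 \<subseteq> W'"
proof -
  show "ksub W1" unfolding ksub_def
  proof (intro conjI ballI)
    show "0 \<in> W1" unfolding W1_def using ksub0[OF W] K0 by force
  next
    fix x y assume "x \<in> W1" "y \<in> W1"
    then obtain u c u' c' where "x = u + c * w" "y = u' + c' * w" "u \<in> W" "c \<in> K" "u' \<in> W" "c' \<in> K"
      unfolding W1_def by blast
    then have "x + y = (u + u') + (c + c') * w" "u + u' \<in> W" "c + c' \<in> K"
      using ksub_add[OF W] Kadd by (auto simp: algebra_simps)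
    then show "x + y \<in> W1" unfolding W1_def by blast
  next
    fix d x assume "d \<in> K" "x \<in> W1"
    then obtain u c where "x = u + c * w" "u \<in> W" "c \<in> K" unfolding W1_def by blast
    moreover have "d * u \<in> W" "d * c \<in> K"
      using ksub_smult[OF W \<open>d \<in> K\<close>] Kmult[OF \<open>d \<in> K\<close>] \<open>u \<in> W\<close> \<open>c \<in> K\<close> by auto
    moreover have "d * x = d * u + (d * c) * w" using \<open>x = u + c * w\<close> by (simp add: algebra_simps)
    ultimately show "d * x \<in> W1" unfolding W1_def by blast
  qed
  show "W \<subseteq> W1"
  proof
    fix u assume "u \<in> W" then have "u = u + 0 * w" "0 \<in> K" using K0 by auto
    then show "u \<in> W1" unfolding W1_def using \<open>u \<in> W\<close> by blast
  qed
  have eq: "W1 = (\<lambda>(u, c). u + c * w) ` (W \<times> K)" unfolding W1_def by auto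
  have inj: "inj_on (\<lambda>(u, c). u + c * w) (W \<times> K)"
  proof (rule inj_onI, clarify)
    fix u c u' c' assume h: "u \<in> W" "c \<in> K" "u' \<in> W" "c' \<in> K" "u + c * w = u' + c' * w"
    show "u = u' \<and> c = c'"
    proof (cases "c = c'")
      case True then show ?thesis using h by simp
    next
      case False
      have "(c - c') * w = u' - u" using h(5) by (simp add: algebra_simps)
      then have "w = inverse (c - c') * (u' - u)" using False by (simp add: field_simps)
      moreover have "inverse (c - c') * (u' - u) \<in> W"
        using ksub_smult[OF W Kinv[OF Kdiff[OF h(2) h(4)]] ksub_diff[OF W h(3) h(1)]] .
      ultimately show ?thesis using w by simp
    qed
  qed
  show "card W1 = Q * card W" unfolding eq using card_image[OF inj] cardK
    by (simp add: card_cartesian_product)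
  fix W' assume W': "ksub W'" "W \<subseteq> W'" "w \<in> W'"
  show "W1 \<subseteq> W'" unfolding W1_def using ksub_add[OF W'(1)] ksub_smult[OF W'(1)] W' by blast
qed

lemma ksub_rel:
  assumes "ksub W" "ksub W'" "W \<subseteq> W'"
  shows "\<exists>e. card W' = Q ^ e * card W \<and> (W \<noteq> W' \<longrightarrow> e > 0)"
  using assms
proof (induction "card W' - card W" arbitrary: W rule: less_induct)
  case less
  show ?case
  proof (cases "W = W'")
    case True then show ?thesis by (intro exI[of _ 0]) simp
  next
    case False
    then obtain w where w: "w \<in> W'" "w \<notin> W" using less.prems by blast
    define W1 where "W1 = {u + c * w | u c. u \<in> W \<and> c \<in> K}"
    have W1: "ksub W1" "W \<subseteq> W1" "card W1 = Q * card W"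
      unfolding W1_def by (rule ksub_ext[OF less.prems(1) w(2)])+
    have "W1 \<subseteq> W'" unfolding W1_def by (rule ksub_ext(4)[OF less.prems(1) w(2) less.prems(2) less.prems(3) w(1)])
    note W1 = W1 this
    have cW: "card W > 0" using ksub0[OF less.prems(1)] by (auto simp: card_gt_0_iff)
    have "card W1 > card W" using W1(3) Q_gt1 cW by simp
    moreover have "card W1 \<le> card W'" using W1(4) by (simp add: card_mono)
    ultimately have "card W' - card W1 < card W' - card W" by simp
    from less.hyps[OF this W1(1) less.prems(2) W1(4)]
    obtain e where e: "card W' = Q ^ e * card W1" by blast
    then have "card W' = Q ^ Suc e * card W" using W1(3) by simp
    then show ?thesis by blast
  qed
qed

lemma ksub_card: "ksub W \<Longrightarrow> \<exists>a. card W = Q ^ a"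
proof -
  assume W: "ksub W"
  have "{0} \<subseteq> W" using ksub0[OF W] by simp
  from ksub_rel[OF ksub_zero W this] obtain e where "card W = Q ^ e * card {0::'a}" by blast
  then show ?thesis by auto
qed

lemma Q_pow_inj: "Q ^ a = Q ^ b \<longleftrightarrow> a = b"
  using Q_gt1 by (simp add: power_inject_exp)
lemma Q_pow_le: "Q ^ a \<le> Q ^ b \<longleftrightarrow> a \<le> b"
  using Q_gt1 by (simp add: power_increasing_iff)

lemma dimq_eq: "card W = Q ^ a \<Longrightarrow> dimq q W = m * a"
proof -
  assume h: "card W = Q ^ a"
  have "card W = q ^ (m * a)" using h unfolding Q_def by (simp add: power_mult)
  moreover have "card W = q ^ k \<Longrightarrow> k = m * a" for k
    using \<open>card W = q ^ (m * a)\<close> q2 by (simp add: power_inject_exp)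
  ultimately show ?thesis unfolding dimq_def by (rule the_equality)
qed

lemma dist_ge:
  assumes U: "ksub U" and V: "ksub V" and cU: "card U = Q ^ k" and cV: "card V = Q ^ k" and ne: "U \<noteq> V"
  shows "2 * m \<le> subspace_dist q U V"
proof -
  have fin: "finite U" "finite V" by auto
  obtain a where a: "card (U \<inter> V) = Q ^ a" using ksub_card[OF ksub_Int[OF U V]] by blast
  obtain b where b: "card (ssum U V) = Q ^ b" using ksub_card[OF ksub_ssum[OF U V]] by blast
  have "U \<inter> V \<noteq> U"
  proof
    assume "U \<inter> V = U" then have "U \<subseteq> V" by blast
    then have "U = V" using cU cV fin by (simp add: card_subset_eq)
    then show False using ne by simp
  qed
  then obtain e where e: "card U = Q ^ e * card (U \<inter> V)" "e > 0"
    using ksub_rel[OF ksub_Int[OF U V] U] by blast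
  then have "Q ^ k = Q ^ (e + a)" using cU a by (simp add: power_add)
  then have ka: "k = e + a" using Q_pow_inj by blast
  have "U \<noteq> ssum U V"
  proof
    assume "U = ssum U V" then have "V \<subseteq> U" using ssum_sub2[OF U] by blast
    then have "V = U" using cU cV fin by (simp add: card_subset_eq)
    then show False using ne by simp
  qed
  then obtain e' where e': "card (ssum U V) = Q ^ e' * card U" "e' > 0"
    using ksub_rel[OF U ksub_ssum[OF U V] ssum_sub1[OF V]] by blast
  then have "Q ^ b = Q ^ (e' + k)" using cU b by (simp add: power_add)
  then have kb: "b = e' + k" using Q_pow_inj by blast
  have "subspace_dist q U V = m * b - m * a"
    unfolding subspace_dist_def using dimq_eq[OF a] dimq_eq[OF b] by simp
  also have "m * b - m * a = m * (b - a)" by (simp add: diff_mult_distrib2)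
  finally show ?thesis using ka kb e e' by simp
qed

lemma dist_self: "ksub U \<Longrightarrow> subspace_dist q U U = 0"
  unfolding subspace_dist_def using ssum_self by simp

lemma dist_le:
  assumes U: "ksub U" and V: "ksub V" and I: "ksub I" and S: "ksub S"
    and IUV: "I \<subseteq> U \<inter> V" and cI: "card I = Q ^ k'" and US: "U \<subseteq> S" and VS: "V \<subseteq> S"
    and cS: "card S \<le> Q ^ (k' + 2)"
  shows "subspace_dist q U V \<le> 2 * m"
proof -
  obtain a where a: "card (U \<inter> V) = Q ^ a" using ksub_card[OF ksub_Int[OF U V]] by blast
  obtain b where b: "card (ssum U V) = Q ^ b" using ksub_card[OF ksub_ssum[OF U V]] by blast
  have "card I \<le> card (U \<inter> V)" by (rule card_mono[OF _ IUV]) simp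
  then have "Q ^ k' \<le> Q ^ a" using cI a by simp
  then have ka: "k' \<le> a" using Q_pow_le by blast
  have "ssum U V \<subseteq> S" using ssum_le[OF S US VS] .
  then have "card (ssum U V) \<le> card S" by (intro card_mono) simp_all
  then have "Q ^ b \<le> Q ^ (k' + 2)" using b cS by simp
  then have kb: "b \<le> k' + 2" using Q_pow_le by blast
  have "subspace_dist q U V = m * b - m * a"
    unfolding subspace_dist_def using dimq_eq[OF a] dimq_eq[OF b] by simp
  also have "m * b - m * a = m * (b - a)" by (simp add: diff_mult_distrib2)
  also have "b - a \<le> 2" using ka kb by linarith
  then have "m * (b - a) \<le> m * 2" by (rule mult_le_mono2)
  finally show ?thesis by simp
qed

definition V :: "'a \<Rightarrow> nat \<Rightarrow> 'a set" where "V b k = fspan q m k (\<lambda>j. b ^ j)"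

lemma V_mem: "(\<And>j. j < k \<Longrightarrow> c j \<in> K) \<Longrightarrow> (\<Sum>j<k. c j * b ^ j) \<in> V b k"
  unfolding V_def fspan_def K_def by blast

lemma V_elim: "x \<in> V b k \<Longrightarrow> \<exists>c. (\<forall>j<k. c j \<in> K) \<and> x = (\<Sum>j<k. c j * b ^ j)"
  unfolding V_def fspan_def K_def by blast

lemma V_ksub: "ksub (V b k)"
  unfolding ksub_def
proof (intro conjI ballI)
  have "(\<Sum>j<k. (\<lambda>_. 0) j * b ^ j) \<in> V b k" by (rule V_mem) (simp add: K0)
  then show "0 \<in> V b k" by simp
next
  fix x y assume "x \<in> V b k" "y \<in> V b k"
  then obtain c d where c: "\<forall>j<k. c j \<in> K" "x = (\<Sum>j<k. c j * b ^ j)"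
    and d: "\<forall>j<k. d j \<in> K" "y = (\<Sum>j<k. d j * b ^ j)" using V_elim by metis
  have "x + y = (\<Sum>j<k. (c j + d j) * b ^ j)" using c d by (simp add: sum.distrib distrib_right)
  moreover have "(\<Sum>j<k. (c j + d j) * b ^ j) \<in> V b k" by (rule V_mem) (use c d Kadd in auto)
  ultimately show "x + y \<in> V b k" by simp
next
  fix a x assume a: "a \<in> K" and "x \<in> V b k"
  then obtain c where c: "\<forall>j<k. c j \<in> K" "x = (\<Sum>j<k. c j * b ^ j)" using V_elim by metis
  have "a * x = (\<Sum>j<k. (a * c j) * b ^ j)" unfolding c(2) sum_distrib_left by (simp add: mult.assoc)
  moreover have "(\<Sum>j<k. (a * c j) * b ^ j) \<in> V b k" by (rule V_mem) (use c a Kmult in auto)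
  ultimately show "a * x \<in> V b k" by simp
qed

lemma V_mono: "k \<le> k' \<Longrightarrow> V b k \<subseteq> V b k'"
proof
  fix x assume kk: "k \<le> k'" and "x \<in> V b k"
  then obtain c where c: "\<forall>j<k. c j \<in> K" "x = (\<Sum>j<k. c j * b ^ j)" using V_elim by metis
  define c' where "c' j = (if j < k then c j else 0)" for j
  have "(\<Sum>j<k'. c' j * b ^ j) = (\<Sum>j<k. c' j * b ^ j)"
    by (rule sum.mono_neutral_right) (use kk in \<open>auto simp: c'_def\<close>)
  also have "\<dots> = x" unfolding c(2) by (rule sum.cong) (auto simp: c'_def)
  finally have "x = (\<Sum>j<k'. c' j * b ^ j)" by simp
  moreover have "(\<Sum>j<k'. c' j * b ^ j) \<in> V b k'" by (rule V_mem) (use c K0 in \<open>auto simp: c'_def\<close>)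
  ultimately show "x \<in> V b k'" by simp
qed

lemma V_pow: "j < k \<Longrightarrow> b ^ j \<in> V b k"
proof -
  assume jk: "j < k"
  define c where "c i = (if i = j then 1 else (0::'a))" for i :: nat
  have "(\<Sum>i<k. c i * b ^ i) = (\<Sum>i<k. (if i = j then b ^ j else 0))" by (rule sum.cong) (auto simp: c_def)
  also have "\<dots> = b ^ j" using jk by simp
  finally have "(\<Sum>i<k. c i * b ^ i) = b ^ j" .
  moreover have "(\<Sum>i<k. c i * b ^ i) \<in> V b k" by (rule V_mem) (auto simp: c_def K0 K1)
  ultimately show ?thesis by simp
qed

lemma V_shift_coeffs:
  assumes "\<forall>j<k. c j \<in> K"
  defines "c' \<equiv> (\<lambda>j. if j = 0 then 0 else c (j - 1))"
  shows "(\<Sum>j<k. c j * b ^ j) * b = (\<Sum>j<Suc k. c' j * b ^ j)" "\<forall>j<Suc k. c' j \<in> K"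
proof -
  have "(\<Sum>j<Suc k. c' j * b ^ j) = c' 0 * b ^ 0 + (\<Sum>j<k. c' (Suc j) * b ^ Suc j)"
    by (rule sum.lessThan_Suc_shift)
  also have "\<dots> = (\<Sum>j<k. c j * b ^ j * b)" unfolding c'_def
    by (simp del: power_Suc add: power_Suc2 mult.assoc)
  also have "\<dots> = (\<Sum>j<k. c j * b ^ j) * b" by (simp add: sum_distrib_right)
  finally show "(\<Sum>j<k. c j * b ^ j) * b = (\<Sum>j<Suc k. c' j * b ^ j)" by simp
  show "\<forall>j<Suc k. c' j \<in> K" using assms(1) K0 unfolding c'_def by auto
qed

lemma V_shift: "x \<in> V b k \<Longrightarrow> x * b \<in> V b (Suc k)"
proof -
  assume "x \<in> V b k"
  then obtain c where c: "\<forall>j<k. c j \<in> K" "x = (\<Sum>j<k. c j * b ^ j)" using V_elim by metis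
  define c' where "c' = (\<lambda>j. if j = 0 then 0 else c (j - 1))"
  have "x * b = (\<Sum>j<Suc k. c' j * b ^ j)" unfolding c(2) c'_def by (rule V_shift_coeffs(1)[OF c(1)])
  moreover have "(\<Sum>j<Suc k. c' j * b ^ j) \<in> V b (Suc k)"
    by (rule V_mem) (use V_shift_coeffs(2)[OF c(1)] in \<open>simp add: c'_def\<close>)
  ultimately show ?thesis by simp
qed

lemma V_one: "V b 1 = K"
proof
  show "V b 1 \<subseteq> K"
  proof
    fix x assume "x \<in> V b 1"
    then obtain c where c: "\<forall>j<1. c j \<in> K" "x = (\<Sum>j<1. c j * b ^ j)" using V_elim by metis
    then show "x \<in> K" by simp
  qed
  show "K \<subseteq> V b 1"
  proof
    fix x assume x: "x \<in> K"
    have "(\<Sum>j<1. (\<lambda>_. x) j * b ^ j) \<in> V b 1" by (rule V_mem) (use x in auto)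
    then show "x \<in> V b 1" by simp
  qed
qed

lemma V_image: "V b k = (\<lambda>c. \<Sum>j<k. c j * b ^ j) ` (PiE {..<k} (\<lambda>_. K))"
proof
  show "V b k \<subseteq> (\<lambda>c. \<Sum>j<k. c j * b ^ j) ` (PiE {..<k} (\<lambda>_. K))"
  proof
    fix x assume "x \<in> V b k"
    then obtain c where c: "\<forall>j<k. c j \<in> K" "x = (\<Sum>j<k. c j * b ^ j)" using V_elim by metis
    have "restrict c {..<k} \<in> PiE {..<k} (\<lambda>_. K)" using c(1) by auto
    moreover have "x = (\<Sum>j<k. restrict c {..<k} j * b ^ j)" unfolding c(2) by (rule sum.cong) auto
    ultimately show "x \<in> (\<lambda>c. \<Sum>j<k. c j * b ^ j) ` (PiE {..<k} (\<lambda>_. K))" by blast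
  qed
  show "(\<lambda>c. \<Sum>j<k. c j * b ^ j) ` (PiE {..<k} (\<lambda>_. K)) \<subseteq> V b k"
  proof
    fix x assume "x \<in> (\<lambda>c. \<Sum>j<k. c j * b ^ j) ` (PiE {..<k} (\<lambda>_. K))"
    then obtain c where c: "c \<in> PiE {..<k} (\<lambda>_. K)" "x = (\<Sum>j<k. c j * b ^ j)" by blast
    have "(\<Sum>j<k. c j * b ^ j) \<in> V b k" by (rule V_mem) (use c(1) in auto)
    then show "x \<in> V b k" using c(2) by simp
  qed
qed

lemma V_card_le: "card (V b k) \<le> Q ^ k"
proof -
  have "card (V b k) \<le> card (PiE {..<k} (\<lambda>_. K))" unfolding V_image by (rule card_image_le) (intro finite_PiE; simp)
  also have "\<dots> = Q ^ k" by (simp add: card_PiE cardK)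
  finally show ?thesis .
qed

definition mp :: "'a \<Rightarrow> nat \<Rightarrow> 'a poly \<Rightarrow> bool" where
  "mp b d p \<longleftrightarrow> p \<noteq> 0 \<and> degree p = d \<and> (\<forall>i. Polynomial.coeff p i \<in> subfield q m) \<and> poly p b = 0"

lemma mpd_eq: "minpoly_degree q m b = (LEAST d. \<exists>p. mp b d p)"
  unfolding minpoly_degree_def mp_def by simp

lemma mp_ex: "\<exists>d p. mp b d p"
proof -
  define p0 :: "'a poly" where "p0 = Polynomial.monom 1 (q ^ n) - Polynomial.monom 1 1"
  have "Polynomial.coeff p0 (q ^ n) = 1" unfolding p0_def using qn2 by (simp add: coeff_monom)
  then have "p0 \<noteq> 0" by auto
  moreover have "\<forall>i. Polynomial.coeff p0 i \<in> subfield q m"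
  proof
    fix i
    have "Polynomial.coeff p0 i = (if q ^ n = i then 1 else 0) - (if 1 = i then 1 else 0)"
      unfolding p0_def by (simp add: coeff_monom)
    moreover have "(if q ^ n = i then 1 else 0) - (if 1 = i then 1 else 0) \<in> K"
      by (intro Kdiff) (simp_all add: K0 K1)
    ultimately show "Polynomial.coeff p0 i \<in> subfield q m" unfolding K_def by simp
  qed
  moreover have "poly p0 b = 0" unfolding p0_def using pow_card[of b] cardU by (simp add: poly_monom)
  ultimately show ?thesis unfolding mp_def by blast
qed

lemma mp_L: "\<exists>p. mp b (minpoly_degree q m b) p"
  unfolding mpd_eq by (rule LeastI_ex) (rule mp_ex)

lemma mp_min: "mp b d p \<Longrightarrow> minpoly_degree q m b \<le> d"
  unfolding mpd_eq by (intro Least_le exI)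

lemma indep:
  assumes kL: "k \<le> minpoly_degree q m b" and e: "\<forall>j<k. e j \<in> K" and s: "(\<Sum>j<k. e j * b ^ j) = 0"
  shows "\<forall>j<k. e j = 0"
proof (rule ccontr)
  assume "\<not> (\<forall>j<k. e j = 0)"
  then obtain j0 where j0: "j0 < k" "e j0 \<noteq> 0" by blast
  define p where "p = (\<Sum>j<k. Polynomial.monom (e j) j)"
  have cp: "Polynomial.coeff p i = (if i < k then e i else 0)" for i
    unfolding p_def coeff_sum by (simp add: coeff_monom)
  have "p \<noteq> 0" using cp[of j0] j0 by auto
  moreover have "\<forall>i. Polynomial.coeff p i \<in> subfield q m"
  proof
    fix i show "Polynomial.coeff p i \<in> subfield q m" using cp[of i] e K0 unfolding K_def by auto
  qed
  moreover have "poly p b = 0" unfolding p_def poly_sum poly_monom using s .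
  ultimately have "mp b (degree p) p" unfolding mp_def by blast
  then have "minpoly_degree q m b \<le> degree p" by (rule mp_min)
  moreover have "degree p \<le> k - 1" by (rule degree_le) (use cp in auto)
  ultimately show False using kL j0 by linarith
qed

lemma V_unique:
  assumes kL: "k \<le> minpoly_degree q m b" and c: "\<forall>j<k. c j \<in> K" and d: "\<forall>j<k. d j \<in> K"
    and s: "(\<Sum>j<k. c j * b ^ j) = (\<Sum>j<k. d j * b ^ j)"
  shows "\<forall>j<k. c j = d j"
proof -
  have "(\<Sum>j<k. (c j - d j) * b ^ j) = (\<Sum>j<k. c j * b ^ j) - (\<Sum>j<k. d j * b ^ j)"
    by (simp add: left_diff_distrib sum_subtractf)
  then have z: "(\<Sum>j<k. (c j - d j) * b ^ j) = 0" using s by simp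
  have e: "\<forall>j<k. c j - d j \<in> K"
  proof (intro allI impI)
    fix j assume "j < k" then show "c j - d j \<in> K" using c d by (intro Kdiff) auto
  qed
  have "\<forall>j<k. c j - d j = 0" by (rule indep[OF kL e z])
  then show ?thesis by simp
qed

lemma V_card: "k \<le> minpoly_degree q m b \<Longrightarrow> card (V b k) = Q ^ k"
proof -
  assume kL: "k \<le> minpoly_degree q m b"
  have "inj_on (\<lambda>c. \<Sum>j<k. c j * b ^ j) (PiE {..<k} (\<lambda>_. K))"
  proof (rule inj_onI)
    fix c d assume c: "c \<in> PiE {..<k} (\<lambda>_. K)" and d: "d \<in> PiE {..<k} (\<lambda>_. K)"
      and s: "(\<Sum>j<k. c j * b ^ j) = (\<Sum>j<k. d j * b ^ j)"
    have "\<forall>j<k. c j \<in> K" "\<forall>j<k. d j \<in> K" using c d by (auto simp: PiE_iff)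
    then have "\<forall>j<k. c j = d j" using V_unique[OF kL _ _ s] by blast
    then show "c = d" using PiE_ext[OF c d] by simp
  qed
  then have "card (V b k) = card (PiE {..<k} (\<lambda>_. K))" unfolding V_image by (rule card_image)
  also have "\<dots> = Q ^ k" by (simp add: card_PiE cardK)
  finally show ?thesis .
qed

lemma L_pos: "minpoly_degree q m (b::'a) \<ge> 1"
proof (rule ccontr)
  assume "\<not> minpoly_degree q m b \<ge> 1"
  then have L0: "minpoly_degree q m b = 0" by simp
  obtain p where p: "mp b (minpoly_degree q m b) p" using mp_L by blast
  then have "degree p = 0" "p \<noteq> 0" "poly p b = 0" using L0 unfolding mp_def by auto
  moreover have "poly p b = Polynomial.coeff p 0" using \<open>degree p = 0\<close> by (simp add: poly_altdef)
  moreover have "Polynomial.coeff p (degree p) \<noteq> 0" using \<open>p \<noteq> 0\<close> by simp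
  ultimately show False by simp
qed

lemma bL: "b ^ minpoly_degree q m b \<in> V b (minpoly_degree q m b)"
proof -
  define L where "L = minpoly_degree q m b"
  obtain p where p: "mp b L p" using mp_L unfolding L_def by blast
  then have dp: "degree p = L" and pnz: "p \<noteq> 0" and cK: "\<And>i. Polynomial.coeff p i \<in> K"
    and pb: "poly p b = 0" unfolding mp_def K_def by auto
  define a where "a = Polynomial.coeff p L"
  have anz': "a \<noteq> 0" unfolding a_def using pnz dp leading_coeff_0_iff by metis
  have aK: "a \<in> K" unfolding a_def by (rule cK)
  have "poly p b = (\<Sum>i<Suc L. Polynomial.coeff p i * b ^ i)" unfolding poly_altdef dp
    by (simp add: lessThan_Suc_atMost)
  also have "\<dots> = (\<Sum>i<L. Polynomial.coeff p i * b ^ i) + a * b ^ L" unfolding a_def by simp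
  finally have eq: "a * b ^ L = - (\<Sum>i<L. Polynomial.coeff p i * b ^ i)" using pb by (simp add: eq_neg_iff_add_eq_0 add.commute)
  have "(\<Sum>i<L. (- (Polynomial.coeff p i / a)) * b ^ i) = - (1 / a) * (\<Sum>i<L. Polynomial.coeff p i * b ^ i)"
    by (simp add: sum_distrib_left)
  also have "\<dots> = (1 / a) * (a * b ^ L)" unfolding eq by simp
  also have "\<dots> = b ^ L" using anz' by simp
  finally have r: "(\<Sum>i<L. (- (Polynomial.coeff p i / a)) * b ^ i) = b ^ L" .
  have "(\<Sum>i<L. (- (Polynomial.coeff p i / a)) * b ^ i) \<in> V b L"
  proof (rule V_mem)
    fix j show "- (Polynomial.coeff p j / a) \<in> K" by (intro Kuminus Kdivide cK aK)
  qed
  then show ?thesis using r unfolding L_def by simp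
qed

lemma VL_shift: "x \<in> V b (minpoly_degree q m b) \<Longrightarrow> x * b \<in> V b (minpoly_degree q m b)"
proof -
  define L where "L = minpoly_degree q m b"
  assume "x \<in> V b (minpoly_degree q m b)"
  then obtain c where c: "\<forall>j<L. c j \<in> K" "x = (\<Sum>j<L. c j * b ^ j)" using V_elim unfolding L_def by metis
  define L' where "L' = L - 1"
  have L': "L = Suc L'" using L_pos[of b] unfolding L_def L'_def by simp
  have "x * b = (\<Sum>j<L'. c j * b ^ j) * b + c L' * b ^ L"
    unfolding c(2) L' by (simp add: distrib_left distrib_right mult_ac)
  moreover have "(\<Sum>j<L'. c j * b ^ j) * b \<in> V b L"
  proof -
    have "(\<Sum>j<L'. c j * b ^ j) \<in> V b L'" by (rule V_mem) (use c(1) L' in auto)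
    from V_shift[OF this] show ?thesis using L' by simp
  qed
  moreover have "c L' * b ^ L \<in> V b L"
    using ksub_smult[OF V_ksub, of "c L'" "b ^ L"] c(1) L' bL[of b] unfolding L_def by simp
  ultimately show "x * b \<in> V b (minpoly_degree q m b)" using ksub_add[OF V_ksub] unfolding L_def by metis
qed

lemma VL_pow_mult: "x \<in> V b (minpoly_degree q m b) \<Longrightarrow> x * b ^ j \<in> V b (minpoly_degree q m b)"
proof (induction j)
  case 0 then show ?case by simp
next
  case (Suc j)
  have eq: "x * b ^ Suc j = (x * b ^ j) * b" by (simp add: mult_ac)
  show ?case unfolding eq by (rule VL_shift[OF Suc.IH[OF Suc.prems]])
qed

lemma VL_mult: "x \<in> V b (minpoly_degree q m b) \<Longrightarrow> y \<in> V b (minpoly_degree q m b) \<Longrightarrow> x * y \<in> V b (minpoly_degree q m b)"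
proof -
  define L where "L = minpoly_degree q m b"
  assume x: "x \<in> V b (minpoly_degree q m b)" and "y \<in> V b (minpoly_degree q m b)"
  then obtain c where c: "\<forall>j<L. c j \<in> K" "y = (\<Sum>j<L. c j * b ^ j)" using V_elim unfolding L_def by metis
  have "x * y = (\<Sum>j<L. c j * (x * b ^ j))" unfolding c(2) by (simp add: sum_distrib_left mult_ac)
  also have "\<dots> \<in> V b L"
  proof (rule ksub_sum[OF V_ksub])
    fix j assume "j \<in> {..<L}"
    then show "c j * (x * b ^ j) \<in> V b L"
      using ksub_smult[OF V_ksub] c(1) VL_pow_mult[OF x, of j] unfolding L_def by simp
  qed
  finally show ?thesis unfolding L_def .
qed

lemma VL_one: "1 \<in> V b (minpoly_degree q m b)"
  using V_pow[of 0 "minpoly_degree q m b" b] L_pos[of b] by simp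

lemma VL_inv: "x \<in> V b (minpoly_degree q m b) \<Longrightarrow> x \<noteq> 0 \<Longrightarrow> inverse x \<in> V b (minpoly_degree q m b)"
proof -
  define E where "E = V b (minpoly_degree q m b)"
  assume x: "x \<in> V b (minpoly_degree q m b)" "x \<noteq> 0"
  have "(\<lambda>y. x * y) ` E = E"
  proof (rule endo_inj_surj)
    show "finite E" by simp
    show "(\<lambda>y. x * y) ` E \<subseteq> E" using VL_mult x(1) unfolding E_def by blast
    show "inj_on (\<lambda>y. x * y) E" using x(2) by (auto intro: inj_onI)
  qed
  moreover have "1 \<in> E" unfolding E_def by (rule VL_one)
  ultimately obtain y where "y \<in> E" "x * y = 1" by (metis imageE)
  then have "inverse x = y" by (metis inverse_unique)
  then show ?thesis using \<open>y \<in> E\<close> unfolding E_def by simp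
qed

lemma step_X:
  assumes k1: "1 \<le> k" and kL: "k < minpoly_degree q m b" and y: "y \<in> V b k" and yb: "y * b \<in> V b k"
  shows "y \<in> V b (k - 1)"
proof -
  obtain c where c: "\<forall>j<k. c j \<in> K" "y = (\<Sum>j<k. c j * b ^ j)" using V_elim[OF y] by metis
  obtain d where d: "\<forall>j<k. d j \<in> K" "y * b = (\<Sum>j<k. d j * b ^ j)" using V_elim[OF yb] by metis
  define c' where "c' = (\<lambda>j. if j = 0 then 0 else c (j - 1))"
  define d' where "d' = (\<lambda>j. if j < k then d j else 0)"
  have e1: "y * b = (\<Sum>j<Suc k. c' j * b ^ j)" unfolding c(2) c'_def by (rule V_shift_coeffs(1)[OF c(1)])
  have c'K: "\<forall>j<Suc k. c' j \<in> K" unfolding c'_def by (rule V_shift_coeffs(2)[OF c(1)])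
  have "(\<Sum>j<Suc k. d' j * b ^ j) = (\<Sum>j<k. d' j * b ^ j)" by (simp add: d'_def)
  also have "\<dots> = y * b" unfolding d(2) by (rule sum.cong) (auto simp: d'_def)
  finally have e2: "(\<Sum>j<Suc k. c' j * b ^ j) = (\<Sum>j<Suc k. d' j * b ^ j)" using e1 by simp
  have d'K: "\<forall>j<Suc k. d' j \<in> K" using d(1) K0 unfolding d'_def by auto
  have "\<forall>j<Suc k. c' j = d' j" by (rule V_unique[OF _ c'K d'K e2]) (use kL in simp)
  then have "c' k = d' k" by simp
  then have ck: "c (k - 1) = 0" unfolding c'_def d'_def using k1 by simp
  obtain k' where k': "k = Suc k'" using k1 by (metis Suc_le_D One_nat_def)
  have "y = (\<Sum>j<k'. c j * b ^ j)" unfolding c(2) k' using ck k' by simp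
  moreover have "(\<Sum>j<k'. c j * b ^ j) \<in> V b k'" by (rule V_mem) (use c(1) k' in auto)
  ultimately show ?thesis using k' by simp
qed

lemma stab:
  assumes "1 \<le> k" "k < minpoly_degree q m b" "\<forall>x\<in>V b k. g * x \<in> V b k"
  shows "g \<in> K"
  using assms
proof (induction k)
  case 0 then show ?case by simp
next
  case (Suc k)
  show ?case
  proof (cases "k = 0")
    case True
    have "1 \<in> V b (Suc k)" using True V_one[of b] K1 by simp
    then have "g * 1 \<in> V b (Suc k)" using Suc.prems(3) by blast
    then show ?thesis using True V_one[of b] by simp
  next
    case False
    have "\<forall>x\<in>V b k. g * x \<in> V b k"
    proof
      fix x assume x: "x \<in> V b k"
      have x': "x \<in> V b (Suc k)" using V_mono[of k "Suc k" b] x by auto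
      have "g * x \<in> V b (Suc k)" using Suc.prems(3) x' by blast
      moreover have "g * x * b \<in> V b (Suc k)"
      proof -
        have "x * b \<in> V b (Suc k)" by (rule V_shift[OF x])
        then have "g * (x * b) \<in> V b (Suc k)" using Suc.prems(3) by blast
        then show ?thesis by (simp add: mult.assoc)
      qed
      ultimately have "g * x \<in> V b (Suc k - 1)" using step_X[of "Suc k" b "g * x"] Suc.prems(2) by simp
      then show "g * x \<in> V b k" by simp
    qed
    then show ?thesis using Suc.IH False Suc.prems(2) by simp
  qed
qed

lemma cyc_sub:
  assumes G0: "0 \<notin> G" and G1: "1 \<in> G" and Gm: "\<forall>x\<in>G. \<forall>y\<in>G. x * y \<in> G"
    and Gi: "\<forall>x\<in>G. inverse x \<in> G"
  shows "\<exists>t. t > 0 \<and> t dvd N \<and> G = {\<alpha> ^ j | j. t dvd j}"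
proof -
  have Gp: "x \<in> G \<Longrightarrow> x ^ k \<in> G" for x k
    by (induction k) (use G1 Gm in auto)
  define T where "T = {t. t > 0 \<and> \<alpha> ^ t \<in> G}"
  have NT: "N \<in> T" unfolding T_def using N_pos pow_N[OF anz] G1 by simp
  define t where "t = (LEAST t. t \<in> T)"
  have tT: "t \<in> T" unfolding t_def using NT by (rule LeastI)
  then have tpos: "t > 0" and atG: "\<alpha> ^ t \<in> G" unfolding T_def by auto
  have key: "\<alpha> ^ j \<in> G \<Longrightarrow> t dvd j" for j
  proof -
    assume aj: "\<alpha> ^ j \<in> G"
    have "\<alpha> ^ j = (\<alpha> ^ t) ^ (j div t) * \<alpha> ^ (j mod t)" by (rule pow_divmod)
    then have "\<alpha> ^ (j mod t) = \<alpha> ^ j * inverse ((\<alpha> ^ t) ^ (j div t))" using anz by (simp add: field_simps)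
    moreover have "inverse ((\<alpha> ^ t) ^ (j div t)) \<in> G" using Gi Gp[OF atG] by blast
    ultimately have "\<alpha> ^ (j mod t) \<in> G" using Gm aj by simp
    show "t dvd j"
    proof (rule ccontr)
      assume "\<not> t dvd j"
      then have "j mod t > 0" by (simp add: mod_greater_zero_iff_not_dvd)
      then have "j mod t \<in> T" unfolding T_def using \<open>\<alpha> ^ (j mod t) \<in> G\<close> by simp
      then have "t \<le> j mod t" unfolding t_def by (rule Least_le)
      moreover have "j mod t < t" using tpos by simp
      ultimately show False by simp
    qed
  qed
  have "t dvd N" using key[of N] pow_N[OF anz] G1 by simp
  moreover have "G = {\<alpha> ^ j | j. t dvd j}"
  proof
    show "G \<subseteq> {\<alpha> ^ j | j. t dvd j}"
    proof
      fix x assume x: "x \<in> G"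
      then have "x \<noteq> 0" using G0 by auto
      then obtain j where "x = \<alpha> ^ j" using nz_pow by blast
      then show "x \<in> {\<alpha> ^ j | j. t dvd j}" using key x by blast
    qed
    show "{\<alpha> ^ j | j. t dvd j} \<subseteq> G"
    proof
      fix x assume "x \<in> {\<alpha> ^ j | j. t dvd j}"
      then obtain k where "x = \<alpha> ^ (t * k)" by blast
      then show "x \<in> G" using Gp[OF atG, of k] by (simp add: power_mult)
    qed
  qed
  ultimately show ?thesis using tpos by blast
qed

lemma img_card: "(g::'a) \<noteq> 0 \<Longrightarrow> card ((\<lambda>x. x * g) ` U) = card U"
  by (rule card_image) (auto intro: inj_onI)

lemma img_img: "(\<lambda>x. x * h) ` (\<lambda>x. x * g) ` U = (\<lambda>x. x * (g * h)) ` (U::'a set)"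
  by (simp add: image_image mult.assoc)

lemma img_K: "c \<in> K \<Longrightarrow> c \<noteq> 0 \<Longrightarrow> (\<lambda>x. x * c) ` V b k = V b k"
proof -
  assume c: "c \<in> K" "c \<noteq> 0"
  have sub: "(\<lambda>x. x * c) ` V b k \<subseteq> V b k"
  proof
    fix y assume "y \<in> (\<lambda>x. x * c) ` V b k"
    then obtain x where x: "x \<in> V b k" "y = x * c" by blast
    have "c * x \<in> V b k" by (rule ksub_smult[OF V_ksub c(1) x(1)])
    then show "y \<in> V b k" using x(2) by (simp add: mult.commute)
  qed
  have "card ((\<lambda>x. x * c) ` V b k) = card (V b k)" by (rule img_card[OF c(2)])
  then show ?thesis using sub by (simp add: card_subset_eq)
qed

lemma img_eq_of_K:
  assumes "g \<noteq> 0" "h \<noteq> 0" "g / h \<in> K"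
  shows "(\<lambda>x. x * g) ` V b k = (\<lambda>x. x * h) ` V b k"
proof -
  have "g / h \<noteq> 0" using assms by simp
  have "(\<lambda>x. x * h) ` (\<lambda>x. x * (g / h)) ` V b k = (\<lambda>x. x * ((g / h) * h)) ` V b k" by (rule img_img)
  also have "(g / h) * h = g" using assms by simp
  finally show ?thesis using img_K[OF assms(3) \<open>g / h \<noteq> 0\<close>] by simp
qed

lemma K_of_img_eq:
  assumes k: "1 \<le> k" "k < minpoly_degree q m b" and gh: "g \<noteq> 0" "h \<noteq> 0"
    and eq: "(\<lambda>x. x * g) ` V b k = (\<lambda>x. x * h) ` V b k"
  shows "g / h \<in> K"
proof (rule stab[OF k])
  show "\<forall>x\<in>V b k. g / h * x \<in> V b k"
  proof
    fix x assume x: "x \<in> V b k"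
    then have "x * g \<in> (\<lambda>x. x * h) ` V b k" using eq by blast
    then obtain y where y: "y \<in> V b k" "x * g = y * h" by blast
    then have "g / h * x = y" using gh by (simp add: field_simps)
    then show "g / h * x \<in> V b k" using y by simp
  qed
qed

lemma img_card_V: "g \<noteq> 0 \<Longrightarrow> k \<le> minpoly_degree q m b \<Longrightarrow> card ((\<lambda>x. x * g) ` V b k) = Q ^ k"
  using img_card V_card by simp

lemma VL_img: "b \<noteq> 0 \<Longrightarrow> (\<lambda>x. x * b) ` V b (minpoly_degree q m b) = V b (minpoly_degree q m b)"
proof -
  assume b: "b \<noteq> 0"
  have "(\<lambda>x. x * b) ` V b (minpoly_degree q m b) \<subseteq> V b (minpoly_degree q m b)" using VL_shift by blast
  moreover have "card ((\<lambda>x. x * b) ` V b (minpoly_degree q m b)) = card (V b (minpoly_degree q m b))"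
    by (rule img_card[OF b])
  ultimately show ?thesis by (simp add: card_subset_eq)
qed

lemma dist_lower:
  assumes k: "k \<le> minpoly_degree q m b" and gh: "g \<noteq> 0" "h \<noteq> 0"
    and ne: "(\<lambda>x. x * g) ` V b k \<noteq> (\<lambda>x. x * h) ` V b k"
  shows "2 * m \<le> subspace_dist q ((\<lambda>x. x * g) ` V b k) ((\<lambda>x. x * h) ` V b k)"
  by (rule dist_ge[OF ksub_image_mult[OF V_ksub] ksub_image_mult[OF V_ksub]
        img_card_V[OF gh(1) k] img_card_V[OF gh(2) k] ne])

lemma dist_upper:
  assumes k: "1 \<le> k" "k \<le> minpoly_degree q m b" and b: "b \<noteq> 0"
  shows "subspace_dist q (V b k) ((\<lambda>x. x * b) ` V b k) \<le> 2 * m"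
proof (rule dist_le[OF V_ksub ksub_image_mult[OF V_ksub] ksub_image_mult[OF V_ksub] V_ksub])
  show "(\<lambda>x. x * b) ` V b (k - 1) \<subseteq> V b k \<inter> (\<lambda>x. x * b) ` V b k"
  proof
    fix y assume "y \<in> (\<lambda>x. x * b) ` V b (k - 1)"
    then obtain x where x: "x \<in> V b (k - 1)" "y = x * b" by blast
    have "y \<in> V b (Suc (k - 1))" using V_shift[OF x(1)] x(2) by simp
    then have "y \<in> V b k" using k by simp
    moreover have "x \<in> V b k" using V_mono[of "k - 1" k b] x(1) by auto
    ultimately show "y \<in> V b k \<inter> (\<lambda>x. x * b) ` V b k" using x(2) by blast
  qed
  show "card ((\<lambda>x. x * b) ` V b (k - 1)) = Q ^ (k - 1)" by (rule img_card_V[OF b]) (use k in simp)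
  show "V b k \<subseteq> V b (Suc k)" by (rule V_mono) simp
  show "(\<lambda>x. x * b) ` V b k \<subseteq> V b (Suc k)" using V_shift by blast
  show "card (V b (Suc k)) \<le> Q ^ (k - 1 + 2)" using V_card_le[of b "Suc k"] k by simp
qed



lemma pow_quot_mod:
  assumes t: "t dvd N" and eq: "\<alpha> ^ i = \<alpha> ^ j * \<alpha> ^ e" and te: "t dvd e"
  shows "i mod t = j mod t"
proof -
  have "\<alpha> ^ i = \<alpha> ^ (j + e)" using eq by (simp add: power_add)
  then have "i mod N = (j + e) mod N" using alpha_pow_eq by blast
  then have "i mod N mod t = (j + e) mod N mod t" by simp
  then have "i mod t = (j + e) mod t" using t by (simp add: mod_mod_cancel)
  also have "\<dots> = j mod t" using te by (simp add: mod_add_right_eq[symmetric])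
  finally show ?thesis .
qed

end

locale mainloc = ffa +
  fixes l :: nat and ss :: "nat list" and r :: nat
  assumes r2: "r \<ge> 2" and len: "length ss = r" and sorted: "sorted_wrt (<) ss"
    and hd1: "1 \<le> hd ss" and lastL: "last ss \<le> minpoly_degree q m (\<alpha> ^ l)"
begin

definition "beta = \<alpha> ^ l"
definition "LL = minpoly_degree q m beta"
definition "Fl g = flag_mult (map (V beta) ss) g"
definition "CC = orb \<alpha> (map (V beta) ss)"

lemma beta_nz: "beta \<noteq> 0" unfolding beta_def using anz by simp

lemma ss_nonempty: "ss \<noteq> []" using len r2 by auto
lemma ss0: "ss ! 0 = hd ss" using ss_nonempty by (simp add: hd_conv_nth)
lemma ssl: "ss ! (r - 1) = last ss" using ss_nonempty len by (simp add: last_conv_nth)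

lemma ss_lt: "i < j \<Longrightarrow> j < r \<Longrightarrow> ss ! i < ss ! j"
  using sorted_wrt_nth_less[OF sorted] len by simp

lemma ss_ge1: "i < r \<Longrightarrow> 1 \<le> ss ! i"
proof (cases "i = 0")
  case True then show ?thesis using hd1 ss0 by simp
next
  case False
  assume "i < r"
  then have "ss ! 0 < ss ! i" using ss_lt[of 0 i] False by simp
  then show ?thesis using hd1 ss0 by simp
qed

lemma ss_le_last: "i < r \<Longrightarrow> ss ! i \<le> last ss"
proof -
  assume i: "i < r"
  show ?thesis
  proof (cases "i = r - 1")
    case True then show ?thesis using ssl by simp
  next
    case False then have "ss ! i < ss ! (r - 1)" using ss_lt[of i "r - 1"] i by simp
    then show ?thesis using ssl by simp
  qed
qed

lemma ss_le_L: "i < r \<Longrightarrow> ss ! i \<le> LL"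
  using ss_le_last lastL unfolding LL_def beta_def by (meson le_trans)

lemma ss_lt_L: "i < r - 1 \<Longrightarrow> ss ! i < LL"
proof -
  assume i: "i < r - 1"
  then have "ss ! i < ss ! (r - 1)" using ss_lt[of i "r - 1"] r2 by simp
  then show ?thesis using ssl lastL unfolding LL_def beta_def by simp
qed

lemma ss0_lt_L: "ss ! 0 < LL" using ss_lt_L[of 0] r2 by simp
lemma ss0_ge1: "1 \<le> ss ! 0" using ss_ge1[of 0] r2 by simp

lemma L2: "LL \<ge> 2" using ss0_lt_L ss0_ge1 by simp

lemma beta_notK: "beta \<notin> K"
proof
  assume bK: "beta \<in> K"
  define e where "e j = (if j = 0 then - beta else 1)" for j :: nat
  have "\<forall>j<2. e j \<in> K" using bK K1 Kuminus unfolding e_def by auto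
  moreover have "(\<Sum>j<2. e j * beta ^ j) = 0" unfolding e_def by (simp add: numeral_2_eq_2)
  ultimately have "\<forall>j<2. e j = 0" using indep[of 2 beta e] L2 unfolding LL_def by blast
  then have "e 1 = 0" by simp
  then show False unfolding e_def by simp
qed

lemma Fl_def': "Fl g = map (\<lambda>k. (\<lambda>x. x * g) ` V beta k) ss"
  unfolding Fl_def flag_mult_def by simp

lemma Fl_len: "length (Fl g) = r" unfolding Fl_def' using len by simp

lemma Fl_nth: "i < r \<Longrightarrow> Fl g ! i = (\<lambda>x. x * g) ` V beta (ss ! i)"
  unfolding Fl_def' using len by simp

lemma Fl_mult: "flag_mult (Fl g) h = Fl (g * h)"
  unfolding Fl_def' flag_mult_def by (simp add: image_image mult.assoc)

lemma Fl_1: "Fl 1 = map (V beta) ss" unfolding Fl_def' by simp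

lemma CC_eq: "CC = {Fl (\<alpha> ^ j) | j. True}"
  unfolding CC_def orb_def Fl_def by simp

lemma Fl_eq_iff:
  assumes "g \<noteq> 0" "h \<noteq> 0"
  shows "Fl g = Fl h \<longleftrightarrow> g / h \<in> K"
proof
  assume "Fl g = Fl h"
  then have "Fl g ! 0 = Fl h ! 0" by simp
  then have "(\<lambda>x. x * g) ` V beta (ss ! 0) = (\<lambda>x. x * h) ` V beta (ss ! 0)" using Fl_nth[of 0] r2 by simp
  then show "g / h \<in> K" using K_of_img_eq[OF ss0_ge1 ss0_lt_L[unfolded LL_def] assms] by simp
next
  assume "g / h \<in> K"
  show "Fl g = Fl h"
  proof (rule nth_equalityI)
    show "length (Fl g) = length (Fl h)" by (simp add: Fl_len)
    fix i assume "i < length (Fl g)"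
    then have i: "i < r" by (simp add: Fl_len)
    show "Fl g ! i = Fl h ! i" unfolding Fl_nth[OF i] by (rule img_eq_of_K[OF assms \<open>g / h \<in> K\<close>])
  qed
qed

lemma comp_ne:
  assumes "g \<noteq> 0" "h \<noteq> 0" "Fl g \<noteq> Fl h" "i < r" "ss ! i < LL"
  shows "Fl g ! i \<noteq> Fl h ! i"
proof
  assume "Fl g ! i = Fl h ! i"
  then have "(\<lambda>x. x * g) ` V beta (ss ! i) = (\<lambda>x. x * h) ` V beta (ss ! i)" using Fl_nth assms(4) by simp
  then have "g / h \<in> K" using K_of_img_eq[OF ss_ge1[OF assms(4)] assms(5)[unfolded LL_def] assms(1,2)] by simp
  then show False using Fl_eq_iff assms by simp
qed

lemma comp_dist_ge:
  assumes "g \<noteq> 0" "h \<noteq> 0" "Fl g \<noteq> Fl h" "i < r" "ss ! i < LL"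
  shows "2 * m \<le> subspace_dist q (Fl g ! i) (Fl h ! i)"
  unfolding Fl_nth[OF assms(4)]
  by (rule dist_lower) (use assms comp_ne[OF assms] Fl_nth[OF assms(4)] ss_le_L[OF assms(4)] in \<open>simp_all add: LL_def\<close>)

lemma t_K: "(Q - 1) dvd N" "N div (Q - 1) > 0"
proof -
  show d: "(Q - 1) dvd N" unfolding Q_def by (rule sub_dvd[OF mdvd])
  then obtain k where k: "N = (Q - 1) * k" by blast
  then have "k > 0" using N_pos by (cases k) auto
  moreover have "N div (Q - 1) = k" using k Q_gt1 by simp
  ultimately show "N div (Q - 1) > 0" by simp
qed

lemma K_nz: "K - {0} = {\<alpha> ^ j | j. (N div (Q - 1)) dvd j}"
  unfolding K_def Q_def by (rule subfield_nz[OF mdvd])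

lemma CC_image: "CC = (\<lambda>j. Fl (\<alpha> ^ j)) ` {..<N div (Q - 1)}" (is "_ = ?R")
proof
  define t where "t = N div (Q - 1)"
  have tp: "t > 0" using t_K unfolding t_def by simp
  show "CC \<subseteq> ?R"
  proof
    fix F assume "F \<in> CC"
    then obtain j where F: "F = Fl (\<alpha> ^ j)" unfolding CC_eq by blast
    have "\<alpha> ^ j = (\<alpha> ^ t) ^ (j div t) * \<alpha> ^ (j mod t)" by (rule pow_divmod)
    then have eq1: "\<alpha> ^ j = \<alpha> ^ (t * (j div t)) * \<alpha> ^ (j mod t)" by (simp only: power_mult)
    have nz: "\<alpha> ^ (j mod t) \<noteq> 0" using anz by simp
    have dq: "\<alpha> ^ j / \<alpha> ^ (j mod t) = \<alpha> ^ (t * (j div t))"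
      unfolding eq1 using nz by (rule nonzero_mult_div_cancel_right)
    have "t dvd t * (j div t)" by simp
    then have "\<alpha> ^ (t * (j div t)) \<in> {\<alpha> ^ j | j. t dvd j}" by blast
    then have "\<alpha> ^ (t * (j div t)) \<in> K" using K_nz unfolding t_def by blast
    then have "\<alpha> ^ j / \<alpha> ^ (j mod t) \<in> K" using dq by simp
    moreover have "\<alpha> ^ j \<noteq> 0" using anz by simp
    ultimately have "Fl (\<alpha> ^ j) = Fl (\<alpha> ^ (j mod t))" using Fl_eq_iff[of "\<alpha> ^ j" "\<alpha> ^ (j mod t)"] nz by blast
    moreover have "j mod t \<in> {..<N div (Q - 1)}" using tp unfolding t_def by simp
    ultimately show "F \<in> ?R" using F by (metis rev_image_eqI)
  qed
  show "?R \<subseteq> CC" unfolding CC_eq by blast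
qed

lemma CC_inj: "inj_on (\<lambda>j. Fl (\<alpha> ^ j)) {..<N div (Q - 1)}"
proof (rule inj_onI)
  define t where "t = N div (Q - 1)"
  have tN: "t dvd N"
  proof -
    obtain k where k: "N = (Q - 1) * k" using t_K(1) by blast
    then have "t = k" unfolding t_def using Q_gt1 by simp
    then show ?thesis using k by simp
  qed
  fix i j assume i: "i \<in> {..<N div (Q - 1)}" and j: "j \<in> {..<N div (Q - 1)}" and eq: "Fl (\<alpha> ^ i) = Fl (\<alpha> ^ j)"
  then have "\<alpha> ^ i / \<alpha> ^ j \<in> K" using Fl_eq_iff anz by simp
  moreover have "\<alpha> ^ i / \<alpha> ^ j \<noteq> 0" using anz by simp
  ultimately have "\<alpha> ^ i / \<alpha> ^ j \<in> K - {0}" by simp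
  then have "\<alpha> ^ i / \<alpha> ^ j \<in> {\<alpha> ^ j | j. t dvd j}" using K_nz unfolding t_def by simp
  then obtain e where e: "\<alpha> ^ i / \<alpha> ^ j = \<alpha> ^ e" "t dvd e" by blast
  then have "\<alpha> ^ i = \<alpha> ^ j * \<alpha> ^ e" using anz by (simp add: field_simps)
  then have "i mod t = j mod t" using pow_quot_mod[OF tN _ e(2)] by blast
  then show "i = j" using i j unfolding t_def by simp
qed

lemma card_CC: "card CC = N div (Q - 1)"
  unfolding CC_image by (rule trans[OF card_image[OF CC_inj]]) simp

lemma finite_CC: "finite CC" unfolding CC_image by simp

lemma CC_mem: "F \<in> CC \<Longrightarrow> \<exists>g. g \<noteq> 0 \<and> F = Fl g"
proof -
  assume "F \<in> CC"
  then obtain j where "F = Fl (\<alpha> ^ j)" unfolding CC_eq by blast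
  moreover have "\<alpha> ^ j \<noteq> 0" using anz by simp
  ultimately show ?thesis by blast
qed

lemma Fl1_mem: "Fl 1 \<in> CC"
proof -
  have "Fl 1 = Fl (\<alpha> ^ 0)" by simp
  then show ?thesis unfolding CC_eq by blast
qed
lemma Flb_mem: "Fl beta \<in> CC" unfolding CC_eq beta_def by blast

lemma Fl1_ne_Flb: "Fl 1 \<noteq> Fl beta"
proof
  assume "Fl 1 = Fl beta"
  then have "1 / beta \<in> K" using Fl_eq_iff[of 1 beta] beta_nz by simp
  then have "inverse (1 / beta) \<in> K" by (rule Kinv)
  then show False using beta_notK by simp
qed

lemma img1: "(\<lambda>x. x * (1::'a)) ` U = U" by simp

lemma comp_dist_upper: "i < r \<Longrightarrow> subspace_dist q (Fl 1 ! i) (Fl beta ! i) \<le> 2 * m"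
  unfolding Fl_nth img1 by (rule dist_upper[OF ss_ge1 ss_le_L[unfolded LL_def] beta_nz])

lemma flag_dist_Fl: "flag_dist q (Fl g) (Fl h) = (\<Sum>i<r. subspace_dist q (Fl g ! i) (Fl h ! i))"
  unfolding flag_dist_def Fl_len ..

lemma min_eq:
  fixes D :: "nat set"
  assumes "finite D" "v \<in> D" "\<And>x. x \<in> D \<Longrightarrow> v \<le> x"
  shows "Min D = v"
  using assms by (intro Min_eqI) auto

lemma finite_D: "finite {flag_dist q F G | F G. F \<in> CC \<and> G \<in> CC \<and> F \<noteq> G}"
proof -
  have "{flag_dist q F G | F G. F \<in> CC \<and> G \<in> CC \<and> F \<noteq> G} \<subseteq> (\<lambda>(F, G). flag_dist q F G) ` (CC \<times> CC)"
    by auto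
  moreover have "finite ((\<lambda>(F, G). flag_dist q F G) ` (CC \<times> CC))" using finite_CC by simp
  ultimately show ?thesis by (rule finite_subset)
qed


lemma best_friend: "is_best_friend q n m (map (V beta) ss)"
  unfolding is_best_friend_def flag_friend_def
proof (intro conjI allI impI ballI)
  show "m dvd n" by (rule mdvd)
next
  fix U and c :: 'a and u :: 'a assume "U \<in> set (map (V beta) ss)" "c \<in> subfield q m" "u \<in> U"
  then obtain k where "U = V beta k" by auto
  then show "c * u \<in> U" using ksub_smult[OF V_ksub] \<open>c \<in> subfield q m\<close> \<open>u \<in> U\<close> unfolding K_def by blast
next
  fix d' assume h: "d' dvd n \<and> (\<forall>U\<in>set (map (V beta) ss). \<forall>c\<in>subfield q d'. \<forall>u\<in>U. c * u \<in> U)"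
  have U0: "V beta (ss ! 0) \<in> set (map (V beta) ss)" using len r2 by simp
  have sub: "subfield q d' \<subseteq> K"
  proof
    fix c :: 'a assume c: "c \<in> subfield q d'"
    have "\<forall>x\<in>V beta (ss ! 0). c * x \<in> V beta (ss ! 0)" using h U0 c by blast
    then show "c \<in> K" by (rule stab[OF ss0_ge1 ss0_lt_L[unfolded LL_def]])
  qed
  have "q ^ d' = card (subfield q d' :: 'a set)" using subfield_card h by simp
  also have "\<dots> \<le> card K" by (rule card_mono[OF _ sub]) simp
  also have "\<dots> = q ^ m" using cardK unfolding Q_def .
  finally show "d' \<le> m" using q2 by (simp add: power_le_imp_le_exp)
qed

lemma card_result: "card CC = (q ^ n - 1) div (q ^ m - 1)"
  using card_CC unfolding N_def Q_def .

lemma D_lower: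
  assumes x: "x \<in> {flag_dist q F G | F G. F \<in> CC \<and> G \<in> CC \<and> F \<noteq> G}"
  shows "(\<Sum>i<r. (if ss ! i < LL then 2 * m else 0)) \<le> x"
proof -
  obtain F G where FG: "x = flag_dist q F G" "F \<in> CC" "G \<in> CC" "F \<noteq> G" using x by blast
  obtain g h where g: "g \<noteq> 0" "F = Fl g" and h: "h \<noteq> 0" "G = Fl h" using CC_mem FG by metis
  have "x = (\<Sum>i<r. subspace_dist q (Fl g ! i) (Fl h ! i))" using FG g h flag_dist_Fl by simp
  moreover have "(\<Sum>i<r. (if ss ! i < LL then 2 * m else 0)) \<le> (\<Sum>i<r. subspace_dist q (Fl g ! i) (Fl h ! i))"
  proof (rule sum_mono)
    fix i assume "i \<in> {..<r}"
    then show "(if ss ! i < LL then 2 * m else 0) \<le> subspace_dist q (Fl g ! i) (Fl h ! i)"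
      using comp_dist_ge[OF g(1) h(1)] FG g h by auto
  qed
  ultimately show ?thesis by simp
qed

lemma Flb_dist: "flag_dist q (Fl 1) (Fl beta) \<in> {flag_dist q F G | F G. F \<in> CC \<and> G \<in> CC \<and> F \<noteq> G}"
  using Fl1_mem Flb_mem Fl1_ne_Flb by blast

lemma case1:
  assumes lt: "last ss < LL"
  shows "consistent_code q r CC \<and> flag_min_dist q CC = 2 * m * r"
proof -
  have allL: "i < r \<Longrightarrow> ss ! i < LL" for i using ss_le_last[of i] lt by simp
  have low: "2 * m * r \<le> x" if "x \<in> {flag_dist q F G | F G. F \<in> CC \<and> G \<in> CC \<and> F \<noteq> G}" for x
  proof -
    have "(\<Sum>i<r. (if ss ! i < LL then 2 * m else 0)) = (\<Sum>i<r. 2 * m)" using allL by simp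
    then show ?thesis using D_lower[OF that] by (simp add: mult_ac)
  qed
  have up: "flag_dist q (Fl 1) (Fl beta) \<le> 2 * m * r"
  proof -
    have "flag_dist q (Fl 1) (Fl beta) \<le> (\<Sum>i<r. 2 * m)" unfolding flag_dist_Fl
      by (rule sum_mono) (use comp_dist_upper in simp)
    then show ?thesis by (simp add: mult.commute)
  qed
  have eqv: "flag_dist q (Fl 1) (Fl beta) = 2 * m * r" using low[OF Flb_dist] up by simp
  have vD: "2 * m * r \<in> {flag_dist q F G | F G. F \<in> CC \<and> G \<in> CC \<and> F \<noteq> G}"
    using Flb_dist unfolding eqv .
  have fmd: "flag_min_dist q CC = 2 * m * r"
    unfolding flag_min_dist_def by (rule min_eq[OF finite_D vD low])
  have proj: "projected CC i = (\<lambda>F. F ! i) ` CC" for i unfolding projected_def by blast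
  have disj: "disjoint_code r CC" unfolding disjoint_code_def
  proof (intro allI impI)
    fix i assume i: "i < r"
    have "inj_on (\<lambda>F. F ! i) CC"
    proof (rule inj_onI, rule ccontr)
      fix F G assume F: "F \<in> CC" and G: "G \<in> CC" and eq: "F ! i = G ! i" and ne: "F \<noteq> G"
      obtain g h where g: "g \<noteq> 0" "F = Fl g" and h: "h \<noteq> 0" "G = Fl h" using CC_mem F G by metis
      show False using comp_ne[OF g(1) h(1) _ i allL[OF i]] eq ne g h by simp
    qed
    then show "card (projected CC i) = card CC" unfolding proj by (rule card_image)
  qed
  have smd: "subspace_min_dist q (projected CC i) = 2 * m" if i: "i < r" for i
  proof -
    define P where "P = projected CC i"
    have fP: "finite P" unfolding P_def proj using finite_CC by simp
    have fin: "finite {subspace_dist q U V | U V. U \<in> P \<and> V \<in> P \<and> U \<noteq> V}"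
    proof -
      have "{subspace_dist q U V | U V. U \<in> P \<and> V \<in> P \<and> U \<noteq> V} \<subseteq> (\<lambda>(U, V). subspace_dist q U V) ` (P \<times> P)"
        by auto
      then show ?thesis using fP by (rule finite_subset[OF _ finite_imageI[OF finite_cartesian_product]]) (use fP in simp)
    qed
    have lowp: "2 * m \<le> x" if xin: "x \<in> {subspace_dist q U V | U V. U \<in> P \<and> V \<in> P \<and> U \<noteq> V}" for x
    proof -
      obtain U V where UV: "x = subspace_dist q U V" "U \<in> P" "V \<in> P" "U \<noteq> V" using xin by blast
      obtain F G where "F \<in> CC" "G \<in> CC" "U = F ! i" "V = G ! i" using UV(2,3) unfolding P_def proj by blast
      moreover obtain g h where g: "g \<noteq> 0" "F = Fl g" and h: "h \<noteq> 0" "G = Fl h" using CC_mem calculation by metis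
      ultimately have "Fl g \<noteq> Fl h" using UV(4) by auto
      then show ?thesis using comp_dist_ge[OF g(1) h(1) _ i allL[OF i]] UV g h \<open>U = F ! i\<close> \<open>V = G ! i\<close> by simp
    qed
    have ne1: "Fl 1 ! i \<noteq> Fl beta ! i" using comp_ne[OF _ beta_nz Fl1_ne_Flb i allL[OF i]] by simp
    have mem: "subspace_dist q (Fl 1 ! i) (Fl beta ! i) \<in> {subspace_dist q U V | U V. U \<in> P \<and> V \<in> P \<and> U \<noteq> V}"
      unfolding P_def proj using Fl1_mem Flb_mem ne1 by blast
    have "subspace_dist q (Fl 1 ! i) (Fl beta ! i) = 2 * m" using lowp[OF mem] comp_dist_upper[OF i] by simp
    then have mem2: "2 * m \<in> {subspace_dist q U V | U V. U \<in> P \<and> V \<in> P \<and> U \<noteq> V}" using mem by simp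
    have "Min {subspace_dist q U V | U V. U \<in> P \<and> V \<in> P \<and> U \<noteq> V} = 2 * m"
      by (rule min_eq[OF fin mem2 lowp])
    then show ?thesis unfolding subspace_min_dist_def P_def .
  qed
  have "(\<Sum>i<r. subspace_min_dist q (projected CC i)) = (\<Sum>i<r. 2 * m)" using smd by simp
  also have "\<dots> = 2 * m * r" by simp
  finally show ?thesis unfolding consistent_code_def using disj fmd by simp
qed



lemma case2_dist:
  assumes eqL: "last ss = LL"
  shows "flag_min_dist q CC = 2 * m * (r - 1)"
proof -
  have r1: "r = Suc (r - 1)" using r2 by simp
  have low: "2 * m * (r - 1) \<le> x" if xin: "x \<in> {flag_dist q F G | F G. F \<in> CC \<and> G \<in> CC \<and> F \<noteq> G}" for x
  proof -
    have "(\<Sum>i<r - 1. 2 * m) = (\<Sum>i<r - 1. (if ss ! i < LL then 2 * m else 0))"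
      using ss_lt_L by simp
    also have "\<dots> \<le> (\<Sum>i<r. (if ss ! i < LL then 2 * m else 0))"
      by (rule sum_mono2) auto
    also have "\<dots> \<le> x" by (rule D_lower[OF xin])
    finally show ?thesis by (simp add: mult_ac)
  qed
  have up: "flag_dist q (Fl 1) (Fl beta) \<le> 2 * m * (r - 1)"
  proof -
    have "flag_dist q (Fl 1) (Fl beta) = (\<Sum>i<Suc (r - 1). subspace_dist q (Fl 1 ! i) (Fl beta ! i))"
      unfolding flag_dist_Fl using r1 by simp
    also have "\<dots> = (\<Sum>i<r - 1. subspace_dist q (Fl 1 ! i) (Fl beta ! i))
        + subspace_dist q (Fl 1 ! (r - 1)) (Fl beta ! (r - 1))" by simp
    also have "subspace_dist q (Fl 1 ! (r - 1)) (Fl beta ! (r - 1)) = 0"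
    proof -
      have i: "r - 1 < r" using r2 by simp
      have "Fl 1 ! (r - 1) = V beta LL" using Fl_nth[OF i] ssl eqL by simp
      moreover have "Fl beta ! (r - 1) = V beta LL"
        using Fl_nth[OF i] ssl eqL VL_img[OF beta_nz] unfolding LL_def by simp
      ultimately show ?thesis using dist_self[OF V_ksub] by simp
    qed
    also have "(\<Sum>i<r - 1. subspace_dist q (Fl 1 ! i) (Fl beta ! i)) \<le> (\<Sum>i<r - 1. 2 * m)"
      by (rule sum_mono) (use comp_dist_upper in simp)
    finally show ?thesis by (simp add: mult_ac)
  qed
  have eqv: "flag_dist q (Fl 1) (Fl beta) = 2 * m * (r - 1)" using low[OF Flb_dist] up by simp
  have vD: "2 * m * (r - 1) \<in> {flag_dist q F G | F G. F \<in> CC \<and> G \<in> CC \<and> F \<noteq> G}"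
    using Flb_dist unfolding eqv .
  show ?thesis unfolding flag_min_dist_def by (rule min_eq[OF finite_D vD low])
qed

lemma E_sub: "\<exists>t. t > 0 \<and> t dvd N \<and> V beta LL - {0} = {\<alpha> ^ j | j. t dvd j}"
proof (rule cyc_sub)
  show "0 \<notin> V beta LL - {0}" by simp
  show "1 \<in> V beta LL - {0}" using VL_one unfolding LL_def by simp
  show "\<forall>x\<in>V beta LL - {0}. \<forall>y\<in>V beta LL - {0}. x * y \<in> V beta LL - {0}"
    using VL_mult unfolding LL_def by simp
  show "\<forall>x\<in>V beta LL - {0}. inverse x \<in> V beta LL - {0}"
    using VL_inv unfolding LL_def by simp
qed

lemma orb_Fl: "orb (\<alpha> ^ c) (Fl (\<alpha> ^ i)) = {Fl (\<alpha> ^ (i + c * j)) | j. True}"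
  unfolding orb_def Fl_mult by (simp add: power_add power_mult)

lemma case2_decomp:
  assumes eqL: "last ss = LL"
  defines "c \<equiv> N div (Q ^ LL - 1)"
  shows "CC = (\<Union>i<c. orb (\<alpha> ^ c) (Fl (\<alpha> ^ i)))"
    "\<forall>i<c. \<forall>j<c. i \<noteq> j \<longrightarrow> orb (\<alpha> ^ c) (Fl (\<alpha> ^ i)) \<inter> orb (\<alpha> ^ c) (Fl (\<alpha> ^ j)) = {}"
proof -
  obtain t where t: "t > 0" "t dvd N" and G: "V beta LL - {0} = {\<alpha> ^ j | j. t dvd j}" using E_sub by blast
  have cE: "card (V beta LL) = Q ^ LL" by (rule V_card) (simp add: LL_def)
  have "card (V beta LL - {0}) = Q ^ LL - 1" using cE ksub0[OF V_ksub] by (simp add: card_Diff_singleton)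
  then have "N div t = Q ^ LL - 1" using G powset_card(2)[OF t(2) t(1)] by simp
  moreover obtain u where u: "N = t * u" using t(2) by blast
  ultimately have "u = Q ^ LL - 1" using t(1) by simp
  then have ct: "c = t" unfolding c_def using u N_pos by (simp add: nonzero_mult_div_cancel_right)
  show "CC = (\<Union>i<c. orb (\<alpha> ^ c) (Fl (\<alpha> ^ i)))"
  proof
    show "CC \<subseteq> (\<Union>i<c. orb (\<alpha> ^ c) (Fl (\<alpha> ^ i)))"
    proof
      fix F assume "F \<in> CC"
      then obtain j where F: "F = Fl (\<alpha> ^ j)" unfolding CC_eq by blast
      have "j = j mod c + c * (j div c)" by simp
      then have "F = Fl (\<alpha> ^ (j mod c + c * (j div c)))" using F by metis
      then have "F \<in> orb (\<alpha> ^ c) (Fl (\<alpha> ^ (j mod c)))" unfolding orb_Fl by blast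
      moreover have "j mod c < c" using ct t(1) by simp
      ultimately show "F \<in> (\<Union>i<c. orb (\<alpha> ^ c) (Fl (\<alpha> ^ i)))" by blast
    qed
    show "(\<Union>i<c. orb (\<alpha> ^ c) (Fl (\<alpha> ^ i))) \<subseteq> CC" unfolding orb_Fl CC_eq by blast
  qed
  show "\<forall>i<c. \<forall>j<c. i \<noteq> j \<longrightarrow> orb (\<alpha> ^ c) (Fl (\<alpha> ^ i)) \<inter> orb (\<alpha> ^ c) (Fl (\<alpha> ^ j)) = {}"
  proof (intro allI impI)
    fix i j assume i: "i < c" and j: "j < c" and ij: "i \<noteq> j"
    show "orb (\<alpha> ^ c) (Fl (\<alpha> ^ i)) \<inter> orb (\<alpha> ^ c) (Fl (\<alpha> ^ j)) = {}"
    proof (rule ccontr)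
      assume "orb (\<alpha> ^ c) (Fl (\<alpha> ^ i)) \<inter> orb (\<alpha> ^ c) (Fl (\<alpha> ^ j)) \<noteq> {}"
      then obtain a a' where eq: "Fl (\<alpha> ^ (i + c * a)) = Fl (\<alpha> ^ (j + c * a'))" unfolding orb_Fl by blast
      define g where "g = \<alpha> ^ (i + c * a)"
      define h where "h = \<alpha> ^ (j + c * a')"
      have gh: "g \<noteq> 0" "h \<noteq> 0" unfolding g_def h_def using anz by simp_all
      have ir: "r - 1 < r" using r2 by simp
      have "Fl g ! (r - 1) = Fl h ! (r - 1)" using eq unfolding g_def h_def by simp
      then have imgeq: "(\<lambda>x. x * g) ` V beta LL = (\<lambda>x. x * h) ` V beta LL"
        using Fl_nth[OF ir] ssl eqL by simp
      have "1 \<in> V beta LL" using VL_one unfolding LL_def by simp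
      then have "1 * g \<in> (\<lambda>x. x * h) ` V beta LL" using imgeq by blast
      then obtain y where y: "y \<in> V beta LL" "g = y * h" by auto
      then have "y \<noteq> 0" using gh by auto
      then have "y \<in> {\<alpha> ^ j | j. t dvd j}" using G y(1) by blast
      then obtain e where e: "y = \<alpha> ^ e" "t dvd e" by blast
      have "\<alpha> ^ (i + c * a) = \<alpha> ^ (j + c * a') * \<alpha> ^ e" using y(2) e(1) unfolding g_def h_def by (simp add: mult.commute)
      then have "(i + c * a) mod t = (j + c * a') mod t" by (rule pow_quot_mod[OF t(2) _ e(2)])
      then have "i mod c = j mod c" using ct by simp
      then show False using i j ij by simp
    qed
  qed
qed


end



lemma hd_le_last_sorted:
  assumes "sorted_wrt (<) (ss::nat list)" "length ss \<ge> 2"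
  shows "hd ss < last ss"
proof -
  have ne: "ss \<noteq> []" using assms(2) by auto
  have "ss ! 0 < ss ! (length ss - 1)" using sorted_wrt_nth_less[OF assms(1), of 0 "length ss - 1"] assms(2) by simp
  then show ?thesis using ne by (simp add: hd_conv_nth last_conv_nth)
qed

theorem mainTheorem5:
  fixes \<alpha> :: "'a::{finite,field}"
    and q n m l r :: nat and ss :: "nat list"
  assumes "prime_power q" and "n \<ge> 1" and "card (UNIV :: 'a set) = q ^ n"
    and "m dvd n"
    and "primitive_elem \<alpha>"
    and "1 \<le> l" and "l < (q ^ n - 1) div (q ^ m - 1)"
    and "r \<ge> 2" and "length ss = r" and "sorted_wrt (<) ss"
    and "1 \<le> hd ss"
    and "last ss \<le> minpoly_degree q m (\<alpha> ^ l)"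
    and "last ss < n div m"
  shows "let s = n div m; L = minpoly_degree q m (\<alpha> ^ l);
             F = map (\<lambda>si. fspan q m si (\<lambda>j. \<alpha> ^ (l * j))) ss;
             C = orb \<alpha> F
         in is_best_friend q n m F
          \<and> card C = (q ^ n - 1) div (q ^ m - 1)
          \<and> (last ss < L \<longrightarrow> consistent_code q r C \<and> flag_min_dist q C = 2 * m * r)
          \<and> (last ss = L \<longrightarrow>
               (let c = (q ^ n - 1) div (q ^ (m * L) - 1) in
                  flag_min_dist q C = 2 * m * (r - 1)
                \<and> C = (\<Union>i<c. orb (\<alpha> ^ c) (flag_mult F (\<alpha> ^ i)))
                \<and> (\<forall>i<c. \<forall>j<c. i \<noteq> j \<longrightarrow>
                      orb (\<alpha> ^ c) (flag_mult F (\<alpha> ^ i)) \<inter> orb (\<alpha> ^ c) (flag_mult F (\<alpha> ^ j)) = {})))"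
proof -
  interpret ff \<alpha> q n m by unfold_locales (use assms in auto)
  have anz: "\<alpha> \<noteq> 0"
  proof
    assume a0: "\<alpha> = 0"
    have "UNIV \<subseteq> {0, 1::'a}"
    proof
      fix x :: 'a
      show "x \<in> {0, 1}"
      proof (cases "x = 0")
        case False
        then obtain j :: nat where "x = \<alpha> ^ j" using assms(5) unfolding primitive_elem_def by blast
        then show ?thesis using a0 by (cases j) auto
      qed simp
    qed
    then have "card (UNIV :: 'a set) \<le> card {0, 1::'a}" by (intro card_mono) auto
    then have qn: "q ^ n \<le> 2" using assms(3) by simp
    have "n = 1"
    proof (rule ccontr)
      assume "n \<noteq> 1"
      then have "q ^ 2 \<le> q ^ n" using assms(2) q2 by (intro power_increasing) auto
      moreover have "4 \<le> q ^ 2" using q2 by (metis numeral_Bit0_eq_double mult_2 power2_eq_square mult_le_mono)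
      ultimately show False using qn by simp
    qed
    then have "m = 1" using assms(4) by simp
    then have "last ss < 1" using assms(13) \<open>n = 1\<close> by simp
    moreover have "hd ss < last ss" by (rule hd_le_last_sorted) (use assms in auto)
    ultimately show False using assms(11) by simp
  qed
  interpret mainloc \<alpha> q n m l ss r by unfold_locales (use assms anz in auto)
  have Feq: "map (\<lambda>si. fspan q m si (\<lambda>j. \<alpha> ^ (l * j))) ss = map (V beta) ss"
    unfolding V_def beta_def by (simp add: power_mult)
  have Leq: "minpoly_degree q m (\<alpha> ^ l) = LL" unfolding LL_def beta_def ..
  have ceq: "(q ^ n - 1) div (q ^ (m * LL) - 1) = N div (Q ^ LL - 1)"
    unfolding N_def Q_def by (simp add: power_mult)
  have Ceq: "orb \<alpha> (map (V beta) ss) = CC" unfolding CC_def ..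
  have Fm: "flag_mult (map (V beta) ss) g = Fl g" for g unfolding Fl_def ..
  show ?thesis
    unfolding Let_def Feq Leq ceq Ceq Fm
  proof (intro conjI impI)
    show "is_best_friend q n m (map (V beta) ss)" by (rule best_friend)
    show "card CC = (q ^ n - 1) div (q ^ m - 1)" by (rule card_result)
    assume "last ss < LL"
    then show "consistent_code q r CC" "flag_min_dist q CC = 2 * m * r" using case1 by auto
  next
    assume h: "last ss = LL"
    show "flag_min_dist q CC = 2 * m * (r - 1)" by (rule case2_dist[OF h])
    show "CC = (\<Union>i<N div (Q ^ LL - 1). orb (\<alpha> ^ (N div (Q ^ LL - 1))) (Fl (\<alpha> ^ i)))"
      by (rule case2_decomp(1)[OF h])
    show "\<forall>i<N div (Q ^ LL - 1). \<forall>j<N div (Q ^ LL - 1). i \<noteq> j \<longrightarrow>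
      orb (\<alpha> ^ (N div (Q ^ LL - 1))) (Fl (\<alpha> ^ i)) \<inter> orb (\<alpha> ^ (N div (Q ^ LL - 1))) (Fl (\<alpha> ^ j)) = {}"
      by (rule case2_decomp(2)[OF h])
  qed
qed


end
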